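(* For $n>0$ and $J\subseteq S$, there are bijections $\mathfrak{S}_n^J(231)\simeq \mathrm{NC}_n^J\simeq \mathrm{NN}_n^J$. In particular these three sets have the same cardinality.
   Context: Let $\mathfrak{S}_n$ be the symmetric group on $[n]=\{1,\dots,n\}$, $s_i=(i,i+1)$, $S=\{s_1,\dots,s_{n-1}\}$, permutations written in one-line notation $w=w_1\cdots w_n$. The inversion set is $\mathrm{inv}(w)=\{(i,j):i<j,\ w_i>w_j\}$, and $u\le_S v$ iff $\mathrm{inv}(u)\subseteq\mathrm{inv}(v)$. For $J\subseteq S$, $\mathfrak{S}_n^J=\{w: w<_S ws \text{ for all } s\in J\}$ (concretely: $w_i<w_{i+1}$ whenever $s_i\in J$). Writing $J=S\setminus\{s_{j_1},\dots,s_{j_r}\}$ with $j_1<\dots<j_r$, the $J$-regions are the blocks $\{1,\dots,j_1\},\{j_1+1,\dots,j_2\},\dots,\{j_r+1,\dots,n\}$. An element $w\in\mathfrak{S}_n^J$ is $(J,231)$-avoiding if there are no indices $i<j<k$ in pairwise different $J$-regions with $w_k<w_i<w_j$ and $w_i=w_k+1$; $\mathfrak{S}_n^J(231)$ is the set of such elements. For a set partition $\mathbf P$ of $[n]$, a bump is a pair $(a,b)$, $a<b$, with $a,b$ in the same part and no element $c$ of that part with $a<c<b$. $\mathbf P$ is $J$-noncrossing if: (NC1) no two distinct elements of the same $J$-region lie in the same part; (NC2) whenever two distinct bumps $(i_1,i_2),(j_1,j_2)$ satisfy $i_1<j_1<i_2<j_2$, either $i_1,j_1$ lie in the same $J$-region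 or $i_2,j_1$ lie in the same $J$-region; (NC3) whenever two distinct bumps satisfy $i_1<j_1<j_2<i_2$, then $i_1$ and $j_1$ lie in different $J$-regions. $\mathrm{NC}_n^J$ is the set of $J$-noncrossing partitions. $\mathbf P$ is $J$-nonnesting if (NN1) no two distinct elements of the same $J$-region lie in the same part, and (NN2) there are no two distinct bumps $(i_1,i_2),(j_1,j_2)$ with $i_1<j_1<j_2<i_2$. $\mathrm{NN}_n^J$ is the set of $J$-nonnesting partitions. *)

theory Defs
  imports "HOL-Combinatorics.Permutations" "HOL-Library.Disjoint_Sets"
begin

text \<open>A subset J of S = {s_1,...,s_(n-1)} is encoded by its index set
  {i. s_i \<in> J} \<subseteq> {1..<n}. Permutations of [n] are functions
  w with w permutes {1..n}; w i is the i-th letter of the one-line notation.\<close>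

text \<open>J-region index of position i: number of cut points s_j \<notin> J with j < i.
  Positions i, i' lie in the same J-region iff their region indices agree.\<close>
definition region :: "nat \<Rightarrow> nat set \<Rightarrow> nat \<Rightarrow> nat" where
  "region n J i = card {j. 1 \<le> j \<and> j < i \<and> j < n \<and> j \<notin> J}"

definition same_region :: "nat \<Rightarrow> nat set \<Rightarrow> nat \<Rightarrow> nat \<Rightarrow> bool" where
  "same_region n J a b \<longleftrightarrow> region n J a = region n J b"

definition parabolic_quotient :: "nat \<Rightarrow> nat set \<Rightarrow> (nat \<Rightarrow> nat) set" where
  "parabolic_quotient n J =
     {w. w permutes {1..n} \<and> (\<forall>i. 1 \<le> i \<and> i < n \<and> i \<in> J \<longrightarrow> w i < w (Suc i))}"

definition J231_avoiding :: "nat \<Rightarrow> nat set \<Rightarrow> (nat \<Rightarrow> nat) set" where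
  "J231_avoiding n J =
     {w \<in> parabolic_quotient n J.
        \<not> (\<exists>i j k. 1 \<le> i \<and> i < j \<and> j < k \<and> k \<le> n \<and>
             \<not> same_region n J i j \<and> \<not> same_region n J j k \<and> \<not> same_region n J i k \<and>
             w k < w i \<and> w i < w j \<and> w i = w k + 1)}"

definition bump :: "nat set set \<Rightarrow> nat \<Rightarrow> nat \<Rightarrow> bool" where
  "bump P a b \<longleftrightarrow> a < b \<and> (\<exists>B\<in>P. a \<in> B \<and> b \<in> B \<and> \<not> (\<exists>c\<in>B. a < c \<and> c < b))"

definition J_noncrossing :: "nat \<Rightarrow> nat set \<Rightarrow> nat set set set" where
  "J_noncrossing n J =
     {P. partition_on {1..n} P \<and>
        (\<forall>B\<in>P. \<forall>a\<in>B. \<forall>b\<in>B. a \<noteq> b \<longrightarrow> \<not> same_region n J a b) \<and>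
        (\<forall>i1 i2 j1 j2. bump P i1 i2 \<and> bump P j1 j2 \<and> (i1, i2) \<noteq> (j1, j2) \<and>
            i1 < j1 \<and> j1 < i2 \<and> i2 < j2 \<longrightarrow>
            same_region n J i1 j1 \<or> same_region n J i2 j1) \<and>
        (\<forall>i1 i2 j1 j2. bump P i1 i2 \<and> bump P j1 j2 \<and> (i1, i2) \<noteq> (j1, j2) \<and>
            i1 < j1 \<and> j1 < j2 \<and> j2 < i2 \<longrightarrow>
            \<not> same_region n J i1 j1)}"

definition J_nonnesting :: "nat \<Rightarrow> nat set \<Rightarrow> nat set set set" where
  "J_nonnesting n J =
     {P. partition_on {1..n} P \<and>
        (\<forall>B\<in>P. \<forall>a\<in>B. \<forall>b\<in>B. a \<noteq> b \<longrightarrow> \<not> same_region n J a b) \<and>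
        \<not> (\<exists>i1 i2 j1 j2. bump P i1 i2 \<and> bump P j1 j2 \<and> (i1, i2) \<noteq> (j1, j2) \<and>
            i1 < j1 \<and> j1 < j2 \<and> j2 < i2)}"

end

theory Submission
  imports Defs
begin


locale reg = fixes rho :: "nat \<Rightarrow> nat" assumes mono: "x \<le> y \<Longrightarrow> rho x \<le> rho y"
begin

lemma rho_less: "rho x < rho y \<Longrightarrow> x < y"
  using mono[of y x] by (meson leI not_le)

definition TT :: "nat set \<Rightarrow> (nat set \<times> nat set) set" where
  "TT X = {(Op,Cl). Op \<subseteq> X \<and> Cl \<subseteq> X \<and> card Op = card Cl \<and>
      (\<forall>r. card {c\<in>Cl. rho c \<le> r} \<le> card {y\<in>Op. rho y < r})}"

definition chains :: "nat set \<Rightarrow> (nat \<times> nat) set \<Rightarrow> bool" where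
  "chains X E \<longleftrightarrow> E \<subseteq> X \<times> X \<and> (\<forall>(a,b)\<in>E. a < b) \<and>
     (\<forall>a b b'. (a,b)\<in>E \<longrightarrow> (a,b')\<in>E \<longrightarrow> b = b') \<and>
     (\<forall>a a' b. (a,b)\<in>E \<longrightarrow> (a',b)\<in>E \<longrightarrow> a = a')"

definition regE :: "(nat \<times> nat) set \<Rightarrow> bool" where
  "regE E \<longleftrightarrow> (\<forall>(a,b)\<in>E. rho a \<noteq> rho b)"

definition ncE :: "(nat \<times> nat) set \<Rightarrow> bool" where
  "ncE E \<longleftrightarrow>
        (\<forall>i1 i2 j1 j2. (i1,i2)\<in>E \<and> (j1,j2)\<in>E \<and> (i1, i2) \<noteq> (j1, j2) \<and>
            i1 < j1 \<and> j1 < i2 \<and> i2 < j2 \<longrightarrow>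
            rho i1 = rho j1 \<or> rho i2 = rho j1) \<and>
        (\<forall>i1 i2 j1 j2. (i1,i2)\<in>E \<and> (j1,j2)\<in>E \<and> (i1, i2) \<noteq> (j1, j2) \<and>
            i1 < j1 \<and> j1 < j2 \<and> j2 < i2 \<longrightarrow>
            \<not> rho i1 = rho j1)"

definition nnE :: "(nat \<times> nat) set \<Rightarrow> bool" where
  "nnE E \<longleftrightarrow> \<not> (\<exists>i1 i2 j1 j2. (i1,i2)\<in>E \<and> (j1,j2)\<in>E \<and> (i1, i2) \<noteq> (j1, j2) \<and>
            i1 < j1 \<and> j1 < j2 \<and> j2 < i2)"

definition NCE where "NCE X = {E. chains X E \<and> regE E \<and> ncE E}"
definition NNE where "NNE X = {E. chains X E \<and> regE E \<and> nnE E}"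

definition dlt :: "(nat \<times> nat) set \<Rightarrow> nat set \<times> nat set" where
  "dlt E = (fst ` E, snd ` E)"

definition goodNC where
  "goodNC S a \<longleftrightarrow> a \<in> S \<and> (\<forall>x\<in>S. x \<noteq> a \<longrightarrow> rho x < rho a \<or> (rho x = rho a \<and> a < x))"

definition pickNC where "pickNC S = (THE a. goodNC S a)"

lemma goodNC_unique: "goodNC S a \<Longrightarrow> goodNC S b \<Longrightarrow> a = b"
  unfolding goodNC_def by (metis not_less_iff_gr_or_eq)

lemma goodNC_exists:
  assumes "finite S" "S \<noteq> {}" shows "\<exists>a. goodNC S a"
proof -
  define R where "R = Max (rho ` S)"
  have R: "R \<in> rho ` S" "\<And>x. x \<in> S \<Longrightarrow> rho x \<le> R" using assms by (auto simp: R_def)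
  define T where "T = {y\<in>S. rho y = R}"
  have T: "finite T" "T \<noteq> {}" using assms R(1) by (auto simp: T_def)
  define a where "a = Min T"
  have a: "a \<in> T" "\<And>x. x \<in> T \<Longrightarrow> a \<le> x" using T by (auto simp: a_def)
  have "goodNC S a" unfolding goodNC_def
  proof (intro conjI ballI impI)
    show "a \<in> S" using a(1) by (auto simp: T_def)
    fix x assume "x \<in> S" "x \<noteq> a"
    then show "rho x < rho a \<or> rho x = rho a \<and> a < x"
      using R(2)[of x] a T_def by (metis (mono_tags, lifting) le_neq_implies_less mem_Collect_eq)
  qed
  then show ?thesis by blast
qed

lemma pickNC: "finite S \<Longrightarrow> S \<noteq> {} \<Longrightarrow> goodNC S (pickNC S)"
  unfolding pickNC_def using goodNC_exists goodNC_unique by (metis theI)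

lemma pickNC_eq: "goodNC S a \<Longrightarrow> pickNC S = a"
  unfolding pickNC_def using goodNC_unique by blast

lemma chains_finite: "finite X \<Longrightarrow> chains X E \<Longrightarrow> finite E"
  unfolding chains_def using finite_subset by blast

lemma chains_inj_fst: "chains X E \<Longrightarrow> inj_on fst E"
  unfolding chains_def inj_on_def by auto

lemma chains_inj_snd: "chains X E \<Longrightarrow> inj_on snd E"
  unfolding chains_def inj_on_def by auto

lemma dlt_TT:
  assumes X: "finite X" and E: "chains X E" "regE E"
  shows "dlt E \<in> TT X"
proof -
  have fE: "finite E" using chains_finite[OF X E(1)] .
  have sub: "fst ` E \<subseteq> X" "snd ` E \<subseteq> X" using E(1) unfolding chains_def by auto
  have card: "card (fst ` E) = card (snd ` E)"
    using card_image[OF chains_inj_fst[OF E(1)]] card_image[OF chains_inj_snd[OF E(1)]] by simp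
  have hall: "card {c\<in>snd ` E. rho c \<le> r} \<le> card {y\<in>fst ` E. rho y < r}" for r
  proof -
    define Er where "Er = {p\<in>E. rho (snd p) \<le> r}"
    have "{c\<in>snd ` E. rho c \<le> r} = snd ` Er" unfolding Er_def by auto
    moreover have "inj_on snd Er" "inj_on fst Er"
      using inj_on_subset[OF chains_inj_snd[OF E(1)]] inj_on_subset[OF chains_inj_fst[OF E(1)]]
      unfolding Er_def by auto
    ultimately have 1: "card {c\<in>snd ` E. rho c \<le> r} = card Er" and 2: "card Er = card (fst ` Er)"
      by (simp_all add: card_image)
    have "fst ` Er \<subseteq> {y\<in>fst ` E. rho y < r}"
    proof
      fix y assume "y \<in> fst ` Er"
      then obtain c where oc: "(y,c) \<in> E" "rho c \<le> r" unfolding Er_def by auto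
      have "y < c" "rho y \<noteq> rho c" using oc(1) E unfolding chains_def regE_def by auto
      hence "rho y < r" using mono[of y c] oc(2) by linarith
      thus "y \<in> {y\<in>fst ` E. rho y < r}" using oc(1) by force
    qed
    hence "card (fst ` Er) \<le> card {y\<in>fst ` E. rho y < r}"
      by (intro card_mono) (use fE in auto)
    with 1 2 show ?thesis by simp
  qed
  show ?thesis unfolding dlt_def TT_def using sub card hall by auto
qed


lemma ncE_D2: "ncE E \<Longrightarrow> (i1,i2)\<in>E \<Longrightarrow> (j1,j2)\<in>E \<Longrightarrow> i1 < j1 \<Longrightarrow> j1 < i2 \<Longrightarrow> i2 < j2
   \<Longrightarrow> rho i1 = rho j1 \<or> rho i2 = rho j1"
  unfolding ncE_def by blast

lemma ncE_D3: "ncE E \<Longrightarrow> (i1,i2)\<in>E \<Longrightarrow> (j1,j2)\<in>E \<Longrightarrow> i1 < j1 \<Longrightarrow> j1 < j2 \<Longrightarrow> j2 < i2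
   \<Longrightarrow> rho i1 \<noteq> rho j1"
  unfolding ncE_def by blast

lemma ncE_I:
  assumes "\<And>i1 i2 j1 j2. (i1,i2)\<in>E \<Longrightarrow> (j1,j2)\<in>E \<Longrightarrow> i1 < j1 \<Longrightarrow> j1 < i2 \<Longrightarrow> i2 < j2
   \<Longrightarrow> rho i1 = rho j1 \<or> rho i2 = rho j1"
  "\<And>i1 i2 j1 j2. (i1,i2)\<in>E \<Longrightarrow> (j1,j2)\<in>E \<Longrightarrow> i1 < j1 \<Longrightarrow> j1 < j2 \<Longrightarrow> j2 < i2
   \<Longrightarrow> rho i1 \<noteq> rho j1"
  shows "ncE E"
  unfolding ncE_def using assms by blast

lemma nnE_D: "nnE E \<Longrightarrow> (i1,i2)\<in>E \<Longrightarrow> (j1,j2)\<in>E \<Longrightarrow> i1 < j1 \<Longrightarrow> j1 < j2 \<Longrightarrow> j2 < i2 \<Longrightarrow> False"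
  unfolding nnE_def by blast

lemma nnE_I:
  assumes "\<And>i1 i2 j1 j2. (i1,i2)\<in>E \<Longrightarrow> (j1,j2)\<in>E \<Longrightarrow> i1 < j1 \<Longrightarrow> j1 < j2 \<Longrightarrow> j2 < i2 \<Longrightarrow> False"
  shows "nnE E"
  unfolding nnE_def using assms by blast

lemma chains_sub: "chains X E \<Longrightarrow> E' \<subseteq> E \<Longrightarrow> chains X E'"
  unfolding chains_def by blast

lemma regE_sub: "regE E \<Longrightarrow> E' \<subseteq> E \<Longrightarrow> regE E'"
  unfolding regE_def by blast

lemma NCE_sub: assumes "E \<in> NCE X" "E' \<subseteq> E" shows "E' \<in> NCE X"
proof -
  have nc: "ncE E" using assms(1) by (simp add: NCE_def)
  have "ncE E'"
  proof (rule ncE_I)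
    fix i1 i2 j1 j2 assume "(i1,i2)\<in>E'" "(j1,j2)\<in>E'" "i1 < j1" "j1 < i2" "i2 < j2"
    then show "rho i1 = rho j1 \<or> rho i2 = rho j1" using ncE_D2[OF nc] assms(2) by blast
  next
    fix i1 i2 j1 j2 assume "(i1,i2)\<in>E'" "(j1,j2)\<in>E'" "i1 < j1" "j1 < j2" "j2 < i2"
    then show "rho i1 \<noteq> rho j1" using ncE_D3[OF nc] assms(2) by blast
  qed
  then show ?thesis using assms chains_sub regE_sub unfolding NCE_def by blast
qed

lemma NNE_sub: assumes "E \<in> NNE X" "E' \<subseteq> E" shows "E' \<in> NNE X"
proof -
  have nn: "nnE E" using assms(1) by (simp add: NNE_def)
  have "nnE E'"
  proof (rule nnE_I)
    fix i1 i2 j1 j2 assume "(i1,i2)\<in>E'" "(j1,j2)\<in>E'" "i1 < j1" "j1 < j2" "j2 < i2"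
    then show False using nnE_D[OF nn] assms(2) by blast
  qed
  then show ?thesis using assms chains_sub regE_sub unfolding NNE_def by blast
qed

lemma dlt_remove:
  assumes "chains X E" "(a,c) \<in> E"
  shows "dlt (E - {(a,c)}) = (fst ` E - {a}, snd ` E - {c})"
proof -
  have f: "\<And>b. (a,b) \<in> E \<Longrightarrow> b = c" and s: "\<And>b. (b,c) \<in> E \<Longrightarrow> b = a"
    using assms unfolding chains_def by blast+
  have "fst ` (E - {(a,c)}) = fst ` E - {a}"
  proof (intro set_eqI iffI)
    fix x assume "x \<in> fst ` (E - {(a,c)})"
    then obtain y where "(x,y) \<in> E" "(x,y) \<noteq> (a,c)" by force
    then show "x \<in> fst ` E - {a}" using f by force
  next
    fix x assume "x \<in> fst ` E - {a}"
    then obtain y where "(x,y) \<in> E" "x \<noteq> a" by force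
    then show "x \<in> fst ` (E - {(a,c)})" by force
  qed
  moreover have "snd ` (E - {(a,c)}) = snd ` E - {c}"
  proof (intro set_eqI iffI)
    fix y assume "y \<in> snd ` (E - {(a,c)})"
    then obtain x where "(x,y) \<in> E" "(x,y) \<noteq> (a,c)" by force
    then show "y \<in> snd ` E - {c}" using s by force
  next
    fix y assume "y \<in> snd ` E - {c}"
    then obtain x where "(x,y) \<in> E" "y \<noteq> c" by force
    then show "y \<in> snd ` (E - {(a,c)})" by force
  qed
  ultimately show ?thesis by (simp add: dlt_def)
qed

lemma NC_partner:
  assumes E: "E \<in> NCE X" and ac: "(a,c) \<in> E" and m: "\<forall>p\<in>E. c \<le> snd p"
  shows "goodNC {y\<in>fst ` E. rho y < rho c} a"
proof -
  have ch: "chains X E" and rg: "regE E" and nc: "ncE E" using E by (auto simp: NCE_def)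
  have ac': "a < c" "rho a \<noteq> rho c" using ac ch rg unfolding chains_def regE_def by auto
  have "rho a < rho c" using ac' mono[of a c] by simp
  moreover have "rho x < rho a \<or> (rho x = rho a \<and> a < x)"
    if x: "x \<in> fst ` E" "rho x < rho c" "x \<noteq> a" for x
  proof -
    obtain y where xy: "(x,y) \<in> E" using x(1) by force
    have "c \<le> y" using m xy by force
    moreover have "y \<noteq> c" using xy ac x(3) ch unfolding chains_def by blast
    ultimately have yc: "c < y" by simp
    have xc: "x < c" using rho_less x(2) .
    show ?thesis
    proof (cases "rho x < rho a")
      case True then show ?thesis by simp
    next
      case False
      show ?thesis
      proof (cases "rho x = rho a")
        case True
        have "\<not> x < a"
        proof
          assume "x < a"
          then show False using ncE_D3[OF nc xy ac] yc ac'(1) True by simp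
        qed
        then show ?thesis using True x(3) by simp
      next
        case False
        hence "rho a < rho x" using \<open>\<not> rho x < rho a\<close> by simp
        hence "a < x" using rho_less by blast
        then have "rho a = rho x \<or> rho c = rho x"
          using ncE_D2[OF nc ac xy] yc xc by simp
        then show ?thesis using False x(2) by auto
      qed
    qed
  qed
  ultimately show ?thesis unfolding goodNC_def using ac by force
qed

lemma NN_partner:
  assumes E: "E \<in> NNE X" and ac: "(a,c) \<in> E" and m: "\<forall>p\<in>E. c \<le> snd p"
  shows "\<forall>x\<in>fst ` E. a \<le> x"
proof
  have ch: "chains X E" and nn: "nnE E" using E by (auto simp: NNE_def)
  have ac': "a < c" using ac ch unfolding chains_def by auto
  fix x assume "x \<in> fst ` E"
  then obtain y where xy: "(x,y) \<in> E" by force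
  show "a \<le> x"
  proof (rule ccontr)
    assume "\<not> a \<le> x"
    hence "x < a" by simp
    have "c \<le> y" using m xy by force
    moreover have "y \<noteq> c" using xy ac \<open>x < a\<close> ch unfolding chains_def by blast
    ultimately have yc: "c < y" by simp
    show False using nnE_D[OF nn xy ac] \<open>x < a\<close> ac' yc by simp
  qed
qed

lemma NCE_chains: "E \<in> NCE X \<Longrightarrow> chains X E" by (simp add: NCE_def)
lemma NNE_chains: "E \<in> NNE X \<Longrightarrow> chains X E" by (simp add: NNE_def)

lemma NC_inj:
  assumes X: "finite X"
  shows "E1 \<in> NCE X \<Longrightarrow> E2 \<in> NCE X \<Longrightarrow> dlt E1 = dlt E2 \<Longrightarrow> E1 = E2"
proof (induction "card E1" arbitrary: E1 E2)
  case 0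
  have "finite E1" using chains_finite[OF X NCE_chains[OF 0(2)]] .
  hence "E1 = {}" using 0 by simp
  hence "snd ` E2 = {}" using 0(4) by (simp add: dlt_def)
  then show ?case using \<open>E1 = {}\<close> by simp
next
  case (Suc k)
  have f1: "finite E1" using chains_finite[OF X NCE_chains[OF Suc(3)]] .
  have f2: "finite E2" using chains_finite[OF X NCE_chains[OF Suc(4)]] .
  have ne: "E1 \<noteq> {}" using Suc(2) by auto
  have sn: "snd ` E1 = snd ` E2" "fst ` E1 = fst ` E2" using Suc(5) by (auto simp: dlt_def)
  define c where "c = Min (snd ` E1)"
  have c1: "c \<in> snd ` E1" "\<forall>p\<in>E1. c \<le> snd p" using f1 ne unfolding c_def by auto
  have c2: "c \<in> snd ` E2" "\<forall>p\<in>E2. c \<le> snd p"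
  proof -
    show "c \<in> snd ` E2" using c1(1) sn(1) by simp
    show "\<forall>p\<in>E2. c \<le> snd p"
    proof
      fix p assume "p \<in> E2"
      then have "snd p \<in> snd ` E1" using sn(1) by simp
      then show "c \<le> snd p" using c1(2) by auto
    qed
  qed
  obtain a1 where a1: "(a1,c) \<in> E1" using c1 by force
  obtain a2 where a2: "(a2,c) \<in> E2" using c2 by force
  have "goodNC {y\<in>fst ` E1. rho y < rho c} a1" using NC_partner[OF Suc(3) a1 c1(2)] .
  moreover have "goodNC {y\<in>fst ` E1. rho y < rho c} a2" using NC_partner[OF Suc(4) a2 c2(2)] sn by simp
  ultimately have "a1 = a2" using goodNC_unique by blast
  define E1' where "E1' = E1 - {(a1,c)}"
  define E2' where "E2' = E2 - {(a1,c)}"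
  have "E1' \<in> NCE X" "E2' \<in> NCE X" using NCE_sub Suc(3,4) unfolding E1'_def E2'_def by auto
  moreover have "dlt E1' = dlt E2'"
    using dlt_remove[OF NCE_chains[OF Suc(3)] a1] dlt_remove[OF NCE_chains[OF Suc(4)] a2] sn \<open>a1 = a2\<close>
    unfolding E1'_def E2'_def by simp
  moreover have "k = card E1'" using Suc(2) a1 f1 unfolding E1'_def by simp
  ultimately have "E1' = E2'" using Suc(1) by blast
  then show ?case using a1 a2 \<open>a1 = a2\<close> unfolding E1'_def E2'_def by blast
qed

lemma NN_inj:
  assumes X: "finite X"
  shows "E1 \<in> NNE X \<Longrightarrow> E2 \<in> NNE X \<Longrightarrow> dlt E1 = dlt E2 \<Longrightarrow> E1 = E2"
proof (induction "card E1" arbitrary: E1 E2)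
  case 0
  have "finite E1" using chains_finite[OF X NNE_chains[OF 0(2)]] .
  hence "E1 = {}" using 0 by simp
  hence "snd ` E2 = {}" using 0(4) by (simp add: dlt_def)
  then show ?case using \<open>E1 = {}\<close> by simp
next
  case (Suc k)
  have f1: "finite E1" using chains_finite[OF X NNE_chains[OF Suc(3)]] .
  have f2: "finite E2" using chains_finite[OF X NNE_chains[OF Suc(4)]] .
  have ne: "E1 \<noteq> {}" using Suc(2) by auto
  have sn: "snd ` E1 = snd ` E2" "fst ` E1 = fst ` E2" using Suc(5) by (auto simp: dlt_def)
  define c where "c = Min (snd ` E1)"
  have c1: "c \<in> snd ` E1" "\<forall>p\<in>E1. c \<le> snd p" using f1 ne unfolding c_def by auto
  have c2: "c \<in> snd ` E2" "\<forall>p\<in>E2. c \<le> snd p"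
  proof -
    show "c \<in> snd ` E2" using c1(1) sn(1) by simp
    show "\<forall>p\<in>E2. c \<le> snd p"
    proof
      fix p assume "p \<in> E2"
      then have "snd p \<in> snd ` E1" using sn(1) by simp
      then show "c \<le> snd p" using c1(2) by auto
    qed
  qed
  obtain a1 where a1: "(a1,c) \<in> E1" using c1 by force
  obtain a2 where a2: "(a2,c) \<in> E2" using c2 by force
  have "\<forall>x\<in>fst ` E1. a1 \<le> x" using NN_partner[OF Suc(3) a1 c1(2)] .
  moreover have "\<forall>x\<in>fst ` E1. a2 \<le> x" using NN_partner[OF Suc(4) a2 c2(2)] sn by simp
  ultimately have "a1 = a2" using a1 a2 sn by (metis antisym fst_conv image_eqI)
  define E1' where "E1' = E1 - {(a1,c)}"
  define E2' where "E2' = E2 - {(a1,c)}"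
  have "E1' \<in> NNE X" "E2' \<in> NNE X" using NNE_sub Suc(3,4) unfolding E1'_def E2'_def by auto
  moreover have "dlt E1' = dlt E2'"
    using dlt_remove[OF NNE_chains[OF Suc(3)] a1] dlt_remove[OF NNE_chains[OF Suc(4)] a2] sn \<open>a1 = a2\<close>
    unfolding E1'_def E2'_def by simp
  moreover have "k = card E1'" using Suc(2) a1 f1 unfolding E1'_def by simp
  ultimately have "E1' = E2'" using Suc(1) by blast
  then show ?case using a1 a2 \<open>a1 = a2\<close> unfolding E1'_def E2'_def by blast
qed


lemma TT_step:
  assumes X: "finite X" and T: "(Op,Cl) \<in> TT X" and c: "c \<in> Cl" "\<forall>x\<in>Cl. c \<le> x"
    and a: "a \<in> Op" "rho a < rho c"
  shows "(Op - {a}, Cl - {c}) \<in> TT X"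
proof -
  have sub: "Op \<subseteq> X" "Cl \<subseteq> X" and cd: "card Op = card Cl"
    and hall: "\<And>r. card {x\<in>Cl. rho x \<le> r} \<le> card {y\<in>Op. rho y < r}"
    using T unfolding TT_def by auto
  have fin: "finite Op" "finite Cl" using sub X finite_subset by auto
  have "card {x\<in>Cl - {c}. rho x \<le> r} \<le> card {y\<in>Op - {a}. rho y < r}" for r
  proof (cases "rho c \<le> r")
    case True
    have "{x\<in>Cl - {c}. rho x \<le> r} = {x\<in>Cl. rho x \<le> r} - {c}" by auto
    moreover have "c \<in> {x\<in>Cl. rho x \<le> r}" using c True by simp
    ultimately have 1: "card {x\<in>Cl - {c}. rho x \<le> r} = card {x\<in>Cl. rho x \<le> r} - 1"
      using fin by simp
    have "{y\<in>Op - {a}. rho y < r} = {y\<in>Op. rho y < r} - {a}" by auto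
    moreover have "a \<in> {y\<in>Op. rho y < r}" using a True by simp
    ultimately have 2: "card {y\<in>Op - {a}. rho y < r} = card {y\<in>Op. rho y < r} - 1"
      using fin by simp
    show ?thesis using 1 2 hall[of r] by simp
  next
    case False
    have "{x\<in>Cl - {c}. rho x \<le> r} = {}"
    proof (rule ccontr)
      assume "{x\<in>Cl - {c}. rho x \<le> r} \<noteq> {}"
      then obtain x where "x \<in> Cl" "rho x \<le> r" by auto
      then show False using c mono[of c x] False by auto
    qed
    then show ?thesis by (simp only:) simp
  qed
  moreover have "card (Op - {a}) = card (Cl - {c})" using cd fin a c by simp
  ultimately show ?thesis using sub unfolding TT_def by auto
qed

lemma TT_S_ne:
  assumes X: "finite X" and T: "(Op,Cl) \<in> TT X" and c: "c \<in> Cl"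
  shows "{y\<in>Op. rho y < rho c} \<noteq> {}"
proof -
  have sub: "Cl \<subseteq> X" and hall: "card {x\<in>Cl. rho x \<le> rho c} \<le> card {y\<in>Op. rho y < rho c}"
    using T unfolding TT_def by auto
  have "finite {x\<in>Cl. rho x \<le> rho c}" using finite_subset[OF sub X] by simp
  moreover have "c \<in> {x\<in>Cl. rho x \<le> rho c}" using c by simp
  ultimately have "card {x\<in>Cl. rho x \<le> rho c} > 0" by (simp add: card_gt_0_iff) blast
  then have "card {y\<in>Op. rho y < rho c} > 0" using hall by linarith
  then show ?thesis by (metis card.empty less_irrefl)
qed

lemma TT_empty:
  assumes X: "finite X" and T: "(Op,Cl) \<in> TT X" and "card Cl = 0"
  shows "Op = {} \<and> Cl = {}"
proof -
  have "Op \<subseteq> X" "Cl \<subseteq> X" "card Op = card Cl" using T unfolding TT_def by auto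
  then show ?thesis using assms finite_subset by (metis card_0_eq)
qed

lemma empty_NCE: "{} \<in> NCE X" unfolding NCE_def chains_def regE_def ncE_def by simp
lemma empty_NNE: "{} \<in> NNE X" unfolding NNE_def chains_def regE_def nnE_def by simp

lemma insert_chains:
  assumes E': "chains X E'" "regE E'" and d: "dlt E' = (Op - {a}, Cl - {c})"
    and a: "a \<in> Op" "Op \<subseteq> X" and c: "c \<in> Cl" "Cl \<subseteq> X" and r: "rho a < rho c"
  shows "chains X (insert (a,c) E') \<and> regE (insert (a,c) E') \<and> dlt (insert (a,c) E') = (Op, Cl)"
proof -
  have fa: "a \<notin> fst ` E'" and sc: "c \<notin> snd ` E'" using d by (auto simp: dlt_def)
  have "a < c" using rho_less r .
  have "chains X (insert (a,c) E')"
    using E'(1) fa sc a c \<open>a < c\<close> unfolding chains_def by (auto simp: image_iff)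
  moreover have "regE (insert (a,c) E')" using E'(2) r unfolding regE_def by auto
  moreover have "dlt (insert (a,c) E') = (Op, Cl)" using d a c by (auto simp: dlt_def)
  ultimately show ?thesis by blast
qed

lemma NC_surj:
  assumes X: "finite X"
  shows "(Op,Cl) \<in> TT X \<Longrightarrow> \<exists>E\<in>NCE X. dlt E = (Op,Cl)"
proof (induction "card Cl" arbitrary: Op Cl)
  case 0
  have "Op = {} \<and> Cl = {}" using TT_empty[OF X 0(2)] 0(1) by simp
  then have "Op = {}" "Cl = {}" by auto
  then show ?case using empty_NCE by (auto simp: dlt_def)
next
  case (Suc k)
  have sub: "Op \<subseteq> X" "Cl \<subseteq> X" using Suc(3) unfolding TT_def by auto
  have fin: "finite Cl" "finite Op" using sub X finite_subset by auto
  have ne: "Cl \<noteq> {}" using Suc(2) by auto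
  define c where "c = Min Cl"
  have c: "c \<in> Cl" "\<forall>x\<in>Cl. c \<le> x" using fin ne unfolding c_def by auto
  define S where "S = {y\<in>Op. rho y < rho c}"
  have Sne: "S \<noteq> {}" using TT_S_ne[OF X Suc(3) c(1)] unfolding S_def .
  have Sfin: "finite S" using fin unfolding S_def by auto
  define a where "a = pickNC S"
  have g: "goodNC S a" unfolding a_def using pickNC[OF Sfin Sne] .
  have aS: "a \<in> Op" "rho a < rho c" using g unfolding goodNC_def S_def by auto
  have T': "(Op - {a}, Cl - {c}) \<in> TT X" using TT_step[OF X Suc(3) c aS] .
  have "k = card (Cl - {c})" using Suc(2) c fin by simp
  then obtain E' where E': "E' \<in> NCE X" "dlt E' = (Op - {a}, Cl - {c})" using Suc(1) T' by blast
  have ch: "chains X E'" "regE E'" and nc: "ncE E'" using E'(1) unfolding NCE_def by auto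
  have IC: "chains X (insert (a,c) E') \<and> regE (insert (a,c) E') \<and> dlt (insert (a,c) E') = (Op, Cl)"
    using insert_chains[OF ch E'(2) aS(1) sub(1) c(1) sub(2) aS(2)] .
  have old: "x \<in> Op - {a} \<and> c < y" if "(x,y) \<in> E'" for x y
  proof -
    have "x \<in> fst ` E'" "y \<in> snd ` E'" using that by force+
    then have "x \<in> Op - {a}" "y \<in> Cl - {c}" using E'(2) by (auto simp: dlt_def)
    then show ?thesis using c(2) by force
  qed
  have ac: "a < c" using rho_less aS(2) .
  have "ncE (insert (a,c) E')"
  proof (rule ncE_I)
    fix i1 i2 j1 j2 assume h: "(i1,i2)\<in>insert (a,c) E'" "(j1,j2)\<in>insert (a,c) E'" "i1 < j1" "j1 < i2" "i2 < j2"
    show "rho i1 = rho j1 \<or> rho i2 = rho j1"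
    proof (cases "(i1,i2) = (a,c)")
      case True
      then have j: "(j1,j2) \<in> E'" using h by auto
      then have j1: "j1 \<in> Op" "j1 \<noteq> a" using old by auto
      show ?thesis
      proof (cases "rho j1 = rho c")
        case False
        have "j1 < c" using h True by simp
        then have "rho j1 < rho c" using mono[of j1 c] False by simp
        then have "j1 \<in> S" using j1 unfolding S_def by simp
        then have "rho j1 < rho a \<or> (rho j1 = rho a \<and> a < j1)" using g j1 unfolding goodNC_def by blast
        moreover have "\<not> rho j1 < rho a" using rho_less[of j1 a] h True by auto
        ultimately show ?thesis using True by auto
      qed (use True in auto)
    next
      case False
      then have i: "(i1,i2) \<in> E'" using h by auto
      show ?thesis
      proof (cases "(j1,j2) = (a,c)")
        case True
        then show ?thesis using old[OF i] h by auto
      next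
        case False
        then show ?thesis using ncE_D2[OF nc i _ h(3-5)] h(2) by auto
      qed
    qed
  next
    fix i1 i2 j1 j2 assume h: "(i1,i2)\<in>insert (a,c) E'" "(j1,j2)\<in>insert (a,c) E'" "i1 < j1" "j1 < j2" "j2 < i2"
    show "rho i1 \<noteq> rho j1"
    proof (cases "(i1,i2) = (a,c)")
      case True
      then have "(j1,j2) \<in> E'" using h by auto
      then show ?thesis using old h True by fastforce
    next
      case False
      then have i: "(i1,i2) \<in> E'" using h by auto
      show ?thesis
      proof (cases "(j1,j2) = (a,c)")
        case True
        have i1: "i1 \<in> Op" "i1 \<noteq> a" using old[OF i] by auto
        show ?thesis
        proof
          assume eq: "rho i1 = rho j1"
          then have "rho i1 < rho c" using True aS by simp
          then have "i1 \<in> S" using i1 unfolding S_def by simp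
          then have "rho i1 < rho a \<or> (rho i1 = rho a \<and> a < i1)" using g i1 unfolding goodNC_def by blast
          then show False using eq True h(3) by auto
        qed
      next
        case False
        then show ?thesis using ncE_D3[OF nc i _ h(3-5)] h(2) by auto
      qed
    qed
  qed
  then show ?case using IC unfolding NCE_def by blast
qed

lemma NN_surj:
  assumes X: "finite X"
  shows "(Op,Cl) \<in> TT X \<Longrightarrow> \<exists>E\<in>NNE X. dlt E = (Op,Cl)"
proof (induction "card Cl" arbitrary: Op Cl)
  case 0
  have "Op = {} \<and> Cl = {}" using TT_empty[OF X 0(2)] 0(1) by simp
  then have "Op = {}" "Cl = {}" by auto
  then show ?case using empty_NNE by (auto simp: dlt_def)
next
  case (Suc k)
  have sub: "Op \<subseteq> X" "Cl \<subseteq> X" using Suc(3) unfolding TT_def by auto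
  have fin: "finite Cl" "finite Op" using sub X finite_subset by auto
  have ne: "Cl \<noteq> {}" using Suc(2) by auto
  define c where "c = Min Cl"
  have c: "c \<in> Cl" "\<forall>x\<in>Cl. c \<le> x" using fin ne unfolding c_def by auto
  define S where "S = {y\<in>Op. rho y < rho c}"
  have Sne: "S \<noteq> {}" using TT_S_ne[OF X Suc(3) c(1)] unfolding S_def .
  then obtain y where y: "y \<in> Op" "rho y < rho c" unfolding S_def by auto
  define a where "a = Min Op"
  have "Op \<noteq> {}" using y by auto
  then have a: "a \<in> Op" "\<forall>x\<in>Op. a \<le> x" using fin unfolding a_def by auto
  have "rho a \<le> rho y" using mono a y by blast
  then have aS: "a \<in> Op" "rho a < rho c" using a y by auto
  have T': "(Op - {a}, Cl - {c}) \<in> TT X" using TT_step[OF X Suc(3) c aS] .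
  have "k = card (Cl - {c})" using Suc(2) c fin by simp
  then obtain E' where E': "E' \<in> NNE X" "dlt E' = (Op - {a}, Cl - {c})" using Suc(1) T' by blast
  have ch: "chains X E'" "regE E'" and nn: "nnE E'" using E'(1) unfolding NNE_def by auto
  have IC: "chains X (insert (a,c) E') \<and> regE (insert (a,c) E') \<and> dlt (insert (a,c) E') = (Op, Cl)"
    using insert_chains[OF ch E'(2) aS(1) sub(1) c(1) sub(2) aS(2)] .
  have old: "x \<in> Op - {a} \<and> c < y" if "(x,y) \<in> E'" for x y
  proof -
    have "x \<in> fst ` E'" "y \<in> snd ` E'" using that by force+
    then have "x \<in> Op - {a}" "y \<in> Cl - {c}" using E'(2) by (auto simp: dlt_def)
    then show ?thesis using c(2) by force
  qed
  have "nnE (insert (a,c) E')"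
  proof (rule nnE_I)
    fix i1 i2 j1 j2 assume h: "(i1,i2)\<in>insert (a,c) E'" "(j1,j2)\<in>insert (a,c) E'" "i1 < j1" "j1 < j2" "j2 < i2"
    show False
    proof (cases "(i1,i2) = (a,c)")
      case True
      then have "(j1,j2) \<in> E'" using h by auto
      then show ?thesis using old h True by fastforce
    next
      case False
      then have i: "(i1,i2) \<in> E'" using h by auto
      show ?thesis
      proof (cases "(j1,j2) = (a,c)")
        case True
        then show ?thesis using old[OF i] a h(3) by fastforce
      next
        case False
        then show ?thesis using nnE_D[OF nn i _ h(3-5)] h(2) by auto
      qed
    qed
  qed
  then show ?case using IC unfolding NNE_def by blast
qed

lemma NC_bij: "finite X \<Longrightarrow> bij_betw dlt (NCE X) (TT X)"
  unfolding bij_betw_def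
proof (intro conjI)
  assume X: "finite X"
  show "inj_on dlt (NCE X)" using NC_inj[OF X] by (meson inj_onI)
  show "dlt ` NCE X = TT X"
  proof
    show "dlt ` NCE X \<subseteq> TT X" using dlt_TT[OF X] unfolding NCE_def by blast
    show "TT X \<subseteq> dlt ` NCE X" using NC_surj[OF X] by force
  qed
qed

lemma NN_bij: "finite X \<Longrightarrow> bij_betw dlt (NNE X) (TT X)"
  unfolding bij_betw_def
proof (intro conjI)
  assume X: "finite X"
  show "inj_on dlt (NNE X)" using NN_inj[OF X] by (meson inj_onI)
  show "dlt ` NNE X = TT X"
  proof
    show "dlt ` NNE X \<subseteq> TT X" using dlt_TT[OF X] unfolding NNE_def by blast
    show "TT X \<subseteq> dlt ` NNE X" using NN_surj[OF X] by force
  qed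
qed

end


context reg begin

definition bset :: "nat set set \<Rightarrow> (nat \<times> nat) set" where
  "bset P = {(a,b). bump P a b}"

lemma part_same: "partition_on X P \<Longrightarrow> B \<in> P \<Longrightarrow> B' \<in> P \<Longrightarrow> a \<in> B \<Longrightarrow> a \<in> B' \<Longrightarrow> B = B'"
  unfolding partition_on_def disjoint_def by blast
lemma part_fin: "partition_on X P \<Longrightarrow> finite X \<Longrightarrow> B \<in> P \<Longrightarrow> finite B \<and> B \<subseteq> X"
proof -
  assume a: "partition_on X P" "finite X" "B \<in> P"
  then have "B \<subseteq> X" unfolding partition_on_def by auto
  then show ?thesis using finite_subset[OF _ a(2)] by simp
qed

lemma part_next:
  assumes P: "partition_on X P" and X: "finite X" and B: "B \<in> P" "a \<in> B" "b \<in> B" "a < b"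
  shows "\<exists>c. (a,c) \<in> bset P \<and> c \<le> b \<and> c \<in> B"
proof -
  have fB: "finite B" using part_fin[OF P X B(1)] by blast
  define c where "c = Min {c\<in>B. a < c}"
  have ne: "{c\<in>B. a < c} \<noteq> {}" using B by auto
  have fS: "finite {c\<in>B. a < c}" using fB by simp
  have cin: "c \<in> {c\<in>B. a < c}" unfolding c_def using Min_in[OF fS ne] .
  have c: "c \<in> B" "a < c" "\<And>d. d \<in> B \<Longrightarrow> a < d \<Longrightarrow> c \<le> d"
    using cin Min_le[OF fS] unfolding c_def by auto
  have "\<not>(\<exists>d\<in>B. a < d \<and> d < c)" using c(3) by (meson leD)
  then have "(a,c) \<in> bset P" unfolding bset_def bump_def
    using c B by blast
  moreover have "c \<le> b" using c(3) B by simp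
  ultimately show ?thesis using c by blast
qed

lemma bset_chains:
  assumes P: "partition_on X P"
  shows "chains X (bset P)"
  unfolding chains_def
proof (intro conjI allI impI)
  show "bset P \<subseteq> X \<times> X" using P unfolding bset_def bump_def partition_on_def by auto
  show "\<forall>(a, b)\<in>bset P. a < b" unfolding bset_def bump_def by auto
  fix a b b' assume h: "(a,b) \<in> bset P" "(a,b') \<in> bset P"
  then obtain B B' where B: "B \<in> P" "a \<in> B" "b \<in> B" "\<not>(\<exists>c\<in>B. a < c \<and> c < b)" "a < b"
    and B': "B' \<in> P" "a \<in> B'" "b' \<in> B'" "\<not>(\<exists>c\<in>B'. a < c \<and> c < b')" "a < b'"
    unfolding bset_def bump_def by auto
  have "B = B'" using part_same[OF P B(1) B'(1) B(2) B'(2)] .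
  then show "b = b'" using B B' by (meson linorder_neqE_nat)
next
  fix a a' b assume h: "(a,b) \<in> bset P" "(a',b) \<in> bset P"
  then obtain B B' where B: "B \<in> P" "a \<in> B" "b \<in> B" "\<not>(\<exists>c\<in>B. a < c \<and> c < b)" "a < b"
    and B': "B' \<in> P" "a' \<in> B'" "b \<in> B'" "\<not>(\<exists>c\<in>B'. a' < c \<and> c < b)" "a' < b"
    unfolding bset_def bump_def by auto
  have "B = B'" using part_same[OF P B(1) B'(1) B(3) B'(3)] .
  then show "a = a'" using B B' by (meson linorder_neqE_nat)
qed

definition prel :: "nat set set \<Rightarrow> (nat \<times> nat) set" where
  "prel P = {(x, y). \<exists>p \<in> P. x \<in> p \<and> y \<in> p}"

lemma bset_rtrancl_prel:
  assumes P: "partition_on X P" and X: "finite X"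
  shows "(x,y) \<in> prel P \<Longrightarrow> x \<le> y \<Longrightarrow> (x,y) \<in> (bset P)\<^sup>*"
proof (induction "y - x" arbitrary: x rule: less_induct)
  case less
  show ?case
  proof (cases "x = y")
    case True then show ?thesis by simp
  next
    case False
    then have xy: "x < y" using less by simp
    obtain B where B: "B \<in> P" "x \<in> B" "y \<in> B" using less(2) unfolding prel_def by auto
    obtain c where c: "(x,c) \<in> bset P" "c \<le> y" "c \<in> B" using part_next[OF P X B xy] by blast
    have "x < c" using c(1) unfolding bset_def bump_def by auto
    have "(c,y) \<in> prel P" using B c unfolding prel_def by auto
    then have "(c,y) \<in> (bset P)\<^sup>*" using less(1)[of c] \<open>x < c\<close> c(2) xy by simp
    then show ?thesis using c(1) by (meson converse_rtrancl_into_rtrancl)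
  qed
qed

lemma prel_bset_rtrancl:
  assumes P: "partition_on X P"
  shows "(x,y) \<in> (bset P)\<^sup>* \<Longrightarrow> x \<in> X \<Longrightarrow> (x,y) \<in> prel P"
proof (induction rule: rtrancl_induct)
  case base
  then show ?case using P unfolding prel_def partition_on_def by auto
next
  case (step y z)
  then obtain B where B: "B \<in> P" "x \<in> B" "y \<in> B" unfolding prel_def by auto
  obtain B' where B': "B' \<in> P" "y \<in> B'" "z \<in> B'" using step(2) unfolding bset_def bump_def by auto
  have "B = B'" using part_same[OF P B(1) B'(1) B(3) B'(2)] .
  then show ?case using B B' unfolding prel_def by auto
qed

lemma prel_eq:
  assumes P: "partition_on X P" and X: "finite X"
  shows "prel P = {(x,y). x \<in> X \<and> y \<in> X \<and> ((x,y) \<in> (bset P)\<^sup>* \<or> (y,x) \<in> (bset P)\<^sup>*)}"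
proof (intro set_eqI iffI)
  fix p assume p: "p \<in> prel P"
  obtain x y where xy: "p = (x,y)" by force
  have "x \<in> X" "y \<in> X" using p xy P unfolding prel_def partition_on_def by auto
  moreover have "(y,x) \<in> prel P" using p xy unfolding prel_def by auto
  ultimately show "p \<in> {(x,y). x \<in> X \<and> y \<in> X \<and> ((x,y) \<in> (bset P)\<^sup>* \<or> (y,x) \<in> (bset P)\<^sup>*)}"
    using bset_rtrancl_prel[OF P X] p xy by (cases "x \<le> y") auto
next
  fix p assume "p \<in> {(x,y). x \<in> X \<and> y \<in> X \<and> ((x,y) \<in> (bset P)\<^sup>* \<or> (y,x) \<in> (bset P)\<^sup>*)}"
  then obtain x y where xy: "p = (x,y)" "x \<in> X" "y \<in> X" "(x,y) \<in> (bset P)\<^sup>* \<or> (y,x) \<in> (bset P)\<^sup>*" by auto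
  then show "p \<in> prel P" using prel_bset_rtrancl[OF P] unfolding prel_def by blast
qed

lemma bset_inj:
  assumes X: "finite X" and P: "partition_on X P" and Q: "partition_on X Q" and eq: "bset P = bset Q"
  shows "P = Q"
proof -
  have "P = X // prel P" using partition_on_eq_quotient[OF P] unfolding prel_def by simp
  also have "prel P = prel Q" using prel_eq[OF P X] prel_eq[OF Q X] eq by simp
  also have "X // prel Q = Q" using partition_on_eq_quotient[OF Q] unfolding prel_def by simp
  finally show ?thesis .
qed


lemma comp_inj:
  assumes inj: "\<forall>a a' b. (a,b)\<in>E \<longrightarrow> (a',b)\<in>E \<longrightarrow> a = a'"
  shows "(x,y) \<in> E\<^sup>* \<Longrightarrow> (z,y) \<in> E\<^sup>* \<Longrightarrow> (x,z) \<in> E\<^sup>* \<or> (z,x) \<in> E\<^sup>*"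
proof (induction arbitrary: z rule: rtrancl_induct)
  case base
  then show ?case by simp
next
  case (step y y')
  show ?case
  proof (cases "z = y'")
    case True
    then show ?thesis using step(1,2) by auto
  next
    case False
    then have "(z,y') \<in> E\<^sup>+" using step(4) by (simp add: rtrancl_eq_or_trancl)
    then obtain u where u: "(z,u) \<in> E\<^sup>*" "(u,y') \<in> E" by (meson tranclD2)
    then have "u = y" using inj step(2) by blast
    then show ?thesis using step(3) u(1) by simp
  qed
qed

lemma comp_fun:
  assumes f: "\<forall>a b b'. (a,b)\<in>E \<longrightarrow> (a,b')\<in>E \<longrightarrow> b = b'"
  shows "(y,x) \<in> E\<^sup>* \<Longrightarrow> (y,z) \<in> E\<^sup>* \<Longrightarrow> (x,z) \<in> E\<^sup>* \<or> (z,x) \<in> E\<^sup>*"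
proof -
  assume h: "(y,x) \<in> E\<^sup>*" "(y,z) \<in> E\<^sup>*"
  have inj: "\<forall>a a' b. (a,b)\<in>E\<inverse> \<longrightarrow> (a',b)\<in>E\<inverse> \<longrightarrow> a = a'" using f by auto
  have "(x,y) \<in> (E\<inverse>)\<^sup>*" "(z,y) \<in> (E\<inverse>)\<^sup>*" using h by (simp_all add: rtrancl_converse)
  then have "(x,z) \<in> (E\<inverse>)\<^sup>* \<or> (z,x) \<in> (E\<inverse>)\<^sup>*" using comp_inj[OF inj] by blast
  then show ?thesis by (auto simp: rtrancl_converse)
qed

lemma chains_le: assumes c: "chains X E" and xy: "(x,y) \<in> E\<^sup>*" shows "x \<le> y"
  using xy
  proof (induction rule: rtrancl_induct)
    case base then show ?case by simp
  next
    case (step y z)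
    then have "y < z" using c unfolding chains_def by auto
    then show ?case using step by simp
  qed

lemma chains_X: assumes c: "chains X E" and xy: "(x,y) \<in> E\<^sup>*" and x: "x \<in> X" shows "y \<in> X"
  using xy x by (induction rule: rtrancl_induct) (use c in \<open>auto simp: chains_def\<close>)

lemma bset_surj:
  assumes E: "chains X E"
  shows "\<exists>P. partition_on X P \<and> bset P = E"
proof -
  define R where "R = {(x,y). x \<in> X \<and> y \<in> X \<and> ((x,y) \<in> E\<^sup>* \<or> (y,x) \<in> E\<^sup>*)}"
  have f: "\<forall>a b b'. (a,b)\<in>E \<longrightarrow> (a,b')\<in>E \<longrightarrow> b = b'"
    and inj: "\<forall>a a' b. (a,b)\<in>E \<longrightarrow> (a',b)\<in>E \<longrightarrow> a = a'"
    and lt: "\<And>a b. (a,b) \<in> E \<Longrightarrow> a < b"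
    and sub: "E \<subseteq> X \<times> X" using E unfolding chains_def by auto
  have eq: "equiv X R"
  proof (rule equivI)
    show "refl_on X R" unfolding refl_on_def R_def by auto
    show "R \<subseteq> X \<times> X" unfolding R_def by auto
    show "sym R" unfolding sym_def R_def by auto
    show "trans R" unfolding trans_def
    proof (intro allI impI)
      fix x y z assume xy: "(x,y) \<in> R" and yz: "(y,z) \<in> R"
      have "x \<in> X" "z \<in> X" using xy yz unfolding R_def by auto
      moreover have "(x,z) \<in> E\<^sup>* \<or> (z,x) \<in> E\<^sup>*"
      proof -
        consider "(x,y) \<in> E\<^sup>*" "(y,z) \<in> E\<^sup>*" | "(x,y) \<in> E\<^sup>*" "(z,y) \<in> E\<^sup>*"
          | "(y,x) \<in> E\<^sup>*" "(y,z) \<in> E\<^sup>*" | "(y,x) \<in> E\<^sup>*" "(z,y) \<in> E\<^sup>*"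
          using xy yz unfolding R_def by blast
        then show ?thesis
        proof cases
          case 1 then show ?thesis by (meson rtrancl_trans)
        next
          case 2 then show ?thesis using comp_inj[OF inj] by blast
        next
          case 3 then show ?thesis using comp_fun[OF f] by blast
        next
          case 4 then show ?thesis by (meson rtrancl_trans)
        qed
      qed
      ultimately show "(x,z) \<in> R" unfolding R_def by auto
    qed
  qed
  define P where "P = X // R"
  have part: "partition_on X P" unfolding P_def using partition_on_quotient[OF eq] .
  have "bset P = E"
  proof (intro set_eqI iffI)
    fix p assume "p \<in> bset P"
    then obtain a b B where ab: "p = (a,b)" "a < b" "B \<in> P" "a \<in> B" "b \<in> B" "\<not>(\<exists>c\<in>B. a < c \<and> c < b)"
      unfolding bset_def bump_def by auto
    obtain x where x: "x \<in> X" "B = R `` {x}" using ab(3) unfolding P_def quotient_def by auto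
    have "(x,a) \<in> R" "(x,b) \<in> R" using x ab by auto
    then have "(a,b) \<in> R" using eq unfolding equiv_def sym_def trans_def by blast
    then have "(a,b) \<in> E\<^sup>* \<or> (b,a) \<in> E\<^sup>*" unfolding R_def by auto
    moreover have "\<not> (b,a) \<in> E\<^sup>*" using chains_le[OF E, of b a] ab(2) by auto
    ultimately have "(a,b) \<in> E\<^sup>+" using ab(2) by (auto simp: rtrancl_eq_or_trancl)
    then obtain u where u: "(a,u) \<in> E" "(u,b) \<in> E\<^sup>*" by (meson tranclD)
    have "a < u" using lt u(1) .
    have "u \<le> b" using chains_le[OF E u(2)] .
    have "(a,u) \<in> R" using u(1) sub unfolding R_def by auto
    then have "(x,u) \<in> R" using \<open>(x,a) \<in> R\<close> eq unfolding equiv_def trans_def by blast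
    then have "u \<in> B" using x by auto
    then have "u = b" using ab(6) \<open>a < u\<close> \<open>u \<le> b\<close> by force
    then show "p \<in> E" using u ab by simp
  next
    fix p assume "p \<in> E"
    then obtain a b where ab: "p = (a,b)" "(a,b) \<in> E" by (cases p) auto
    have abX: "a \<in> X" "b \<in> X" using ab sub by auto
    define B where "B = R `` {a}"
    have B: "B \<in> P" unfolding B_def P_def using abX by (auto simp: quotient_def)
    have "a \<in> B" "b \<in> B" unfolding B_def R_def using abX ab by auto
    moreover have "\<not>(\<exists>c\<in>B. a < c \<and> c < b)"
    proof
      assume "\<exists>c\<in>B. a < c \<and> c < b"
      then obtain c where c: "(a,c) \<in> R" "a < c" "c < b" unfolding B_def by auto
      then have "(a,c) \<in> E\<^sup>* \<or> (c,a) \<in> E\<^sup>*" unfolding R_def by auto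
      moreover have "\<not> (c,a) \<in> E\<^sup>*" using chains_le[OF E, of c a] c by auto
      ultimately have "(a,c) \<in> E\<^sup>+" using c by (auto simp: rtrancl_eq_or_trancl)
      then obtain u where u: "(a,u) \<in> E" "(u,c) \<in> E\<^sup>*" by (meson tranclD)
      then have "u = b" using f ab by blast
      then show False using chains_le[OF E u(2)] c by simp
    qed
    ultimately show "p \<in> bset P" using ab lt[OF ab(2)] B unfolding bset_def bump_def by blast
  qed
  then show ?thesis using part by blast
qed

lemma reg_equiv:
  assumes P: "partition_on X P" and X: "finite X"
  shows "(\<forall>B\<in>P. \<forall>a\<in>B. \<forall>b\<in>B. a \<noteq> b \<longrightarrow> \<not> rho a = rho b) \<longleftrightarrow> regE (bset P)"
proof
  assume h: "\<forall>B\<in>P. \<forall>a\<in>B. \<forall>b\<in>B. a \<noteq> b \<longrightarrow> \<not> rho a = rho b"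
  show "regE (bset P)" unfolding regE_def bset_def bump_def using h by fastforce
next
  assume h: "regE (bset P)"
  show "\<forall>B\<in>P. \<forall>a\<in>B. \<forall>b\<in>B. a \<noteq> b \<longrightarrow> \<not> rho a = rho b"
  proof (intro ballI impI)
    fix B a b assume B: "B \<in> P" "a \<in> B" "b \<in> B" "a \<noteq> b"
    show "\<not> rho a = rho b"
    proof
      assume eq: "rho a = rho b"
      have "\<exists>x y. x \<in> B \<and> y \<in> B \<and> x < y \<and> rho x = rho y"
        using B eq by (metis linorder_neqE_nat)
      then obtain x y where xy: "x \<in> B" "y \<in> B" "x < y" "rho x = rho y" by blast
      obtain c where c: "(x,c) \<in> bset P" "c \<le> y" "c \<in> B" using part_next[OF P X B(1) xy(1-3)] by blast
      have "x < c" using c(1) unfolding bset_def bump_def by auto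
      then have "rho x = rho c" using mono[of x c] mono[of c y] c(2) xy(4) by simp
      then show False using h c(1) unfolding regE_def by auto
    qed
  qed
qed

lemma bset_bij:
  assumes X: "finite X"
  shows "bij_betw bset {P. partition_on X P \<and> Q (bset P)} {E. chains X E \<and> Q E}"
  unfolding bij_betw_def
proof
  show "inj_on bset {P. partition_on X P \<and> Q (bset P)}"
    by (intro inj_onI) (use bset_inj[OF X] in auto)
  show "bset ` {P. partition_on X P \<and> Q (bset P)} = {E. chains X E \<and> Q E}"
  proof
    show "bset ` {P. partition_on X P \<and> Q (bset P)} \<subseteq> {E. chains X E \<and> Q E}"
      using bset_chains by auto
    show "{E. chains X E \<and> Q E} \<subseteq> bset ` {P. partition_on X P \<and> Q (bset P)}"
    proof
      fix E assume "E \<in> {E. chains X E \<and> Q E}"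
      then obtain P where "partition_on X P" "bset P = E" "Q E" using bset_surj by blast
      then show "E \<in> bset ` {P. partition_on X P \<and> Q (bset P)}" by auto
    qed
  qed
qed
end


context reg begin

definition desc :: "nat list \<Rightarrow> nat \<Rightarrow> bool" where
  "desc q v \<longleftrightarrow> Suc v < length q \<and> q!(Suc v) < q!v"

definition Oq where "Oq q = {q!(Suc v) | v. desc q v}"
definition Cq where "Cq q = {q!v | v. desc q v}"
definition Eq where "Eq q = {(q!(Suc v), q!v) | v. desc q v}"

definition par :: "nat list \<Rightarrow> bool" where
  "par q \<longleftrightarrow> (\<forall>u v. u < length q \<longrightarrow> v < length q \<longrightarrow> q!u < q!v \<longrightarrow> rho (q!u) = rho (q!v) \<longrightarrow> u < v)"

definition av :: "nat list \<Rightarrow> bool" where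
  "av q \<longleftrightarrow> \<not> (\<exists>v t. desc q v \<and> Suc v < t \<and> t < length q \<and> q!(Suc v) < q!t \<and> q!t < q!v \<and>
      rho (q!t) \<noteq> rho (q!v) \<and> rho (q!t) \<noteq> rho (q!(Suc v)) \<and> rho (q!(Suc v)) \<noteq> rho (q!v))"

definition LL where "LL X = {q. distinct q \<and> set q = X \<and> par q \<and> av q}"

definition firsts where "firsts X = {x\<in>X. \<forall>y\<in>X. rho y = rho x \<longrightarrow> x \<le> y}"

lemma desc_0: "desc (a#q) 0 \<longleftrightarrow> q \<noteq> [] \<and> hd q < a"
  unfolding desc_def by (cases q) auto

lemma desc_Suc: "desc (a#q) (Suc v) \<longleftrightarrow> desc q v"
  unfolding desc_def by auto

lemma Oq_cons: "Oq (a#q) = Oq q \<union> (if q \<noteq> [] \<and> hd q < a then {hd q} else {})"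
proof (intro set_eqI iffI)
  fix x assume "x \<in> Oq (a#q)"
  then obtain v where v: "x = (a#q)!(Suc v)" "desc (a#q) v" unfolding Oq_def by blast
  show "x \<in> Oq q \<union> (if q \<noteq> [] \<and> hd q < a then {hd q} else {})"
  proof (cases v)
    case 0 then show ?thesis using v by (auto simp: desc_0 hd_conv_nth)
  next
    case (Suc w) then show ?thesis using v by (auto simp: desc_Suc Oq_def)
  qed
next
  fix x assume x: "x \<in> Oq q \<union> (if q \<noteq> [] \<and> hd q < a then {hd q} else {})"
  show "x \<in> Oq (a#q)"
  proof (cases "x \<in> Oq q")
    case True
    then obtain v where "x = q!(Suc v)" "desc q v" unfolding Oq_def by blast
    then have "x = (a#q)!(Suc (Suc v))" "desc (a#q) (Suc v)" by (auto simp: desc_Suc)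
    then show ?thesis unfolding Oq_def by blast
  next
    case False
    then have "q \<noteq> [] \<and> hd q < a" "x = hd q" using x by (auto split: if_splits)
    then have "x = (a#q)!(Suc 0)" "desc (a#q) 0" by (auto simp: desc_0 hd_conv_nth)
    then show ?thesis unfolding Oq_def by blast
  qed
qed

lemma Cq_cons: "Cq (a#q) = Cq q \<union> (if q \<noteq> [] \<and> hd q < a then {a} else {})"
proof (intro set_eqI iffI)
  fix x assume "x \<in> Cq (a#q)"
  then obtain v where v: "x = (a#q)!v" "desc (a#q) v" unfolding Cq_def by blast
  show "x \<in> Cq q \<union> (if q \<noteq> [] \<and> hd q < a then {a} else {})"
  proof (cases v)
    case 0 then show ?thesis using v by (auto simp: desc_0)
  next
    case (Suc w) then show ?thesis using v by (auto simp: desc_Suc Cq_def)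
  qed
next
  fix x assume x: "x \<in> Cq q \<union> (if q \<noteq> [] \<and> hd q < a then {a} else {})"
  show "x \<in> Cq (a#q)"
  proof (cases "x \<in> Cq q")
    case True
    then obtain v where "x = q!v" "desc q v" unfolding Cq_def by blast
    then have "x = (a#q)!(Suc v)" "desc (a#q) (Suc v)" by (auto simp: desc_Suc)
    then show ?thesis unfolding Cq_def by blast
  next
    case False
    then have "q \<noteq> [] \<and> hd q < a" "x = a" using x by (auto split: if_splits)
    then have "x = (a#q)!0" "desc (a#q) 0" by (auto simp: desc_0)
    then show ?thesis unfolding Cq_def by blast
  qed
qed

lemma hd_notin_Oq: "distinct q \<Longrightarrow> q \<noteq> [] \<Longrightarrow> hd q \<notin> Oq q"
  unfolding Oq_def desc_def by (auto simp: hd_conv_nth nth_eq_iff_index_eq)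

lemma notin_Cq: "a \<notin> set q \<Longrightarrow> a \<notin> Cq q"
  unfolding Cq_def desc_def by auto

lemma par_tl: assumes "par (a#q)" shows "par q"
  unfolding par_def
proof (intro allI impI)
  fix u v assume h: "u < length q" "v < length q" "q!u < q!v" "rho (q!u) = rho (q!v)"
  have "Suc u < Suc v" using assms[unfolded par_def, rule_format, of "Suc u" "Suc v"] h by simp
  then show "u < v" by simp
qed

lemma av_tl: assumes "av (a#q)" shows "av q"
  unfolding av_def
proof
  assume "\<exists>v t. desc q v \<and> Suc v < t \<and> t < length q \<and> q!(Suc v) < q!t \<and> q!t < q!v \<and>
      rho (q!t) \<noteq> rho (q!v) \<and> rho (q!t) \<noteq> rho (q!(Suc v)) \<and> rho (q!(Suc v)) \<noteq> rho (q!v)"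
  then obtain v t where h: "desc q v" "Suc v < t" "t < length q" "q!(Suc v) < q!t" "q!t < q!v"
      "rho (q!t) \<noteq> rho (q!v)" "rho (q!t) \<noteq> rho (q!(Suc v))" "rho (q!(Suc v)) \<noteq> rho (q!v)" by blast
  have "desc (a#q) (Suc v)" using h(1) by (simp add: desc_Suc)
  then show False using assms h unfolding av_def
    by (metis (no_types, lifting) Suc_less_eq length_Cons nth_Cons_Suc)
qed

lemma LL_tl: "a#q \<in> LL X \<Longrightarrow> q \<in> LL (X - {a})"
  unfolding LL_def using par_tl av_tl by auto


lemma LL_D: assumes "q \<in> LL X" shows "distinct q" "set q = X" "par q" "av q"
  using assms unfolding LL_def by auto

lemma parD: "par q \<Longrightarrow> u < length q \<Longrightarrow> v < length q \<Longrightarrow> q!u < q!v \<Longrightarrow> rho (q!u) = rho (q!v) \<Longrightarrow> u < v"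
  unfolding par_def by blast

lemma avD: "av q \<Longrightarrow> desc q v \<Longrightarrow> Suc v < t \<Longrightarrow> t < length q \<Longrightarrow> q!(Suc v) < q!t \<Longrightarrow> q!t < q!v \<Longrightarrow>
      rho (q!t) \<noteq> rho (q!v) \<Longrightarrow> rho (q!t) \<noteq> rho (q!(Suc v)) \<Longrightarrow> rho (q!(Suc v)) \<noteq> rho (q!v) \<Longrightarrow> False"
  unfolding av_def by blast

lemma head_char:
  assumes q: "q \<in> LL X" "q \<noteq> []"
  shows "hd q \<in> firsts X - Oq q" "\<forall>m \<in> firsts X - Oq q. hd q \<le> m"
proof -
  note L = LL_D[OF q(1)]
  have h0: "hd q = q!0" using q(2) by (simp add: hd_conv_nth)
  have n0: "0 < length q" using q(2) by simp
  have hX: "hd q \<in> X" using L(2) q(2) by auto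
  have hf: "hd q \<in> firsts X" unfolding firsts_def
  proof (intro CollectI conjI ballI impI hX)
    fix y assume y: "y \<in> X" "rho y = rho (hd q)"
    show "hd q \<le> y"
    proof (rule ccontr)
      assume "\<not> hd q \<le> y"
      obtain u where u: "u < length q" "q!u = y" using y(1) L(2) by (auto simp: in_set_conv_nth)
      have "u < 0" using parD[OF L(3) u(1) n0] u y h0 \<open>\<not> hd q \<le> y\<close> by simp
      then show False by simp
    qed
  qed
  then show "hd q \<in> firsts X - Oq q" using hd_notin_Oq[OF L(1) q(2)] by simp
  show "\<forall>m \<in> firsts X - Oq q. hd q \<le> m"
  proof (rule ballI, rule ccontr)
    fix m assume m: "m \<in> firsts X - Oq q" "\<not> hd q \<le> m"
    have mX: "m \<in> X" and mf: "\<And>y. y \<in> X \<Longrightarrow> rho y = rho m \<Longrightarrow> m \<le> y" using m unfolding firsts_def by auto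
    have hf': "\<And>y. y \<in> X \<Longrightarrow> rho y = rho (hd q) \<Longrightarrow> hd q \<le> y" using hf unfolding firsts_def by auto
    obtain t where t: "t < length q" "q!t = m" using mX L(2) by (auto simp: in_set_conv_nth)
    have "t \<noteq> 0"
    proof
      assume "t = 0" then show False using t m h0 by simp
    qed
    then obtain s where s: "t = Suc s" by (cases t) auto
    have sl: "s < length q" using s t by simp
    have nd: "\<not> desc q s" using m(1) t s unfolding Oq_def by auto
    have "q!s \<noteq> q!t" using L(1) s t(1) sl by (simp add: nth_eq_iff_index_eq)
    then have ps: "q!s < m" using nd t s unfolding desc_def by auto
    have psX: "q!s \<in> X" using L(2) sl by auto
    have r1: "rho (q!s) < rho m"
    proof -
      have "rho (q!s) \<le> rho m" using mono ps by simp
      moreover have "rho (q!s) \<noteq> rho m" using mf[OF psX] ps by fastforce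
      ultimately show ?thesis by simp
    qed
    have r2: "rho m < rho (hd q)"
    proof -
      have "rho m \<le> rho (hd q)" using mono m(2) by simp
      moreover have "rho m \<noteq> rho (hd q)" using hf'[OF mX] m(2) by fastforce
      ultimately show ?thesis by simp
    qed
    define P where "P v \<longleftrightarrow> v < length q \<and> rho (q!v) < rho m" for v
    have Ps: "P s" using sl r1 unfolding P_def by simp
    define v0 where "v0 = (LEAST v. P v)"
    have Pv0: "P v0" using Ps unfolding v0_def by (rule LeastI)
    have v0s: "v0 \<le> s" using Ps unfolding v0_def by (rule Least_le)
    have "v0 \<noteq> 0"
    proof
      assume "v0 = 0" then show False using Pv0 r2 h0 unfolding P_def by simp
    qed
    then obtain w where w: "v0 = Suc w" by (cases v0) auto
    have nPw: "\<not> P w" using not_less_Least[of w P] w unfolding v0_def by simp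
    have wl: "w < length q" "Suc w < length q" using w v0s sl by auto
    have rw: "rho m \<le> rho (q!w)" using nPw wl unfolding P_def by simp
    have "rho (q!w) \<noteq> rho m"
    proof
      assume eq: "rho (q!w) = rho m"
      have "q!w \<noteq> m" using L(1) t wl w v0s s by (auto simp: nth_eq_iff_index_eq)
      moreover have "m \<le> q!w" using mf[of "q!w"] eq wl L(2) by auto
      ultimately have "m < q!w" by simp
      then have "t < w" using parD[OF L(3) t(1) wl(1)] t eq by simp
      then show False using w v0s s by simp
    qed
    then have rw': "rho m < rho (q!w)" using rw by simp
    have rv: "rho (q!(Suc w)) < rho m" using Pv0 w unfolding P_def by simp
    have "q!(Suc w) < m" "m < q!w" using rho_less rv rw' by auto
    then have "desc q w" using wl unfolding desc_def by simp
    then show False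
      using avD[OF L(4) \<open>desc q w\<close>, of t] w v0s s t \<open>q!(Suc w) < m\<close> \<open>m < q!w\<close> rv rw' by fastforce
  qed
qed

lemma second_char:
  assumes q: "f#q' \<in> LL X" "q' \<noteq> []" "hd q' < f"
  shows "hd q' \<in> firsts X" "rho (hd q') < rho f" "\<forall>x\<in>X. \<not> (rho (hd q') < rho x \<and> rho x < rho f)"
proof -
  note L = LL_D[OF q(1)]
  have i1: "hd q' = (f#q')!1" using q(2) by (simp add: hd_conv_nth)
  have l1: "1 < length (f#q')" using q(2) by simp
  have neq: "rho (hd q') \<noteq> rho f"
  proof
    assume "rho (hd q') = rho f"
    then have "(1::nat) < 0" using parD[OF L(3) l1, of 0] q(3) i1 by simp
    then show False by simp
  qed
  then show r: "rho (hd q') < rho f" using mono[of "hd q'" f] q(3) by simp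
  show "hd q' \<in> firsts X" unfolding firsts_def
  proof (intro CollectI conjI ballI impI)
    show "hd q' \<in> X" using L(2) q(2) by auto
    fix y assume y: "y \<in> X" "rho y = rho (hd q')"
    show "hd q' \<le> y"
    proof (rule ccontr)
      assume c: "\<not> hd q' \<le> y"
      have "y \<in> set (f#q')" using y(1) L(2) by simp
      then obtain u where u: "u < length (f#q')" "(f#q')!u = y" by (meson in_set_conv_nth)
      have "u < 1" using parD[OF L(3) u(1) l1] u y i1 c by simp
      then have "y = f" using u by simp
      then show False using y(2) neq by simp
    qed
  qed
  show "\<forall>x\<in>X. \<not> (rho (hd q') < rho x \<and> rho x < rho f)"
  proof (intro ballI notI)
    fix x assume x: "x \<in> X" "rho (hd q') < rho x \<and> rho x < rho f"
    have "x \<in> set (f#q')" using x(1) L(2) by simp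
    then obtain t where t: "t < length (f#q')" "(f#q')!t = x" by (meson in_set_conv_nth)
    have "t \<noteq> 0"
    proof
      assume "t = 0" then show False using t x by simp
    qed
    moreover have "t \<noteq> 1"
    proof
      assume "t = 1" then show False using t x i1 by simp
    qed
    ultimately have t2: "Suc 0 < t" by simp
    have d: "desc (f#q') 0" using desc_0 q by simp
    have "hd q' < x" "x < f" using rho_less x(2) by auto
    then show False using avD[OF L(4) d t2 t(1)] t i1 x(2) by auto
  qed
qed

lemma second_unique:
  assumes "i \<in> firsts X" "rho i < rho f" "\<forall>x\<in>X. \<not> (rho i < rho x \<and> rho x < rho f)"
    and "i' \<in> firsts X" "rho i' < rho f" "\<forall>x\<in>X. \<not> (rho i' < rho x \<and> rho x < rho f)"
  shows "i = i'"
proof -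
  have X: "i \<in> X" "i' \<in> X" using assms unfolding firsts_def by auto
  have "rho i = rho i'" using assms X by (meson linorder_neqE_nat)
  then show ?thesis using assms(1,4) X unfolding firsts_def by (simp add: antisym)
qed

lemma Eq_chains:
  assumes q: "q \<in> LL X"
  shows "chains X (Eq q)" "regE (Eq q)" "dlt (Eq q) = (Oq q, Cq q)"
proof -
  note L = LL_D[OF q]
  show "chains X (Eq q)" unfolding chains_def
  proof (intro conjI allI impI)
    show "Eq q \<subseteq> X \<times> X" using L(2) unfolding Eq_def desc_def by auto
    show "\<forall>(a,b)\<in>Eq q. a < b" unfolding Eq_def desc_def by auto
    fix a b b' assume "(a,b) \<in> Eq q" "(a,b') \<in> Eq q"
    then obtain v v' where "a = q!(Suc v)" "b = q!v" "desc q v" and "a = q!(Suc v')" "b' = q!v'" "desc q v'"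
      unfolding Eq_def by blast
    then show "b = b'" using L(1) unfolding desc_def by (simp add: nth_eq_iff_index_eq)
  next
    fix a a' b assume "(a,b) \<in> Eq q" "(a',b) \<in> Eq q"
    then obtain v v' where "a = q!(Suc v)" "b = q!v" "desc q v" and "a' = q!(Suc v')" "b = q!v'" "desc q v'"
      unfolding Eq_def by blast
    then show "a = a'" using L(1) unfolding desc_def by (simp add: nth_eq_iff_index_eq)
  qed
  show "regE (Eq q)" unfolding regE_def
  proof
    fix p assume "p \<in> Eq q"
    then obtain v where v: "p = (q!(Suc v), q!v)" "desc q v" unfolding Eq_def by auto
    have "\<not> Suc v < v" by simp
    then have "rho (q!(Suc v)) \<noteq> rho (q!v)" using parD[OF L(3), of "Suc v" v] v(2) unfolding desc_def by auto
    then show "case p of (a,b) \<Rightarrow> rho a \<noteq> rho b" using v by simp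
  qed
  show "dlt (Eq q) = (Oq q, Cq q)" unfolding dlt_def Eq_def Oq_def Cq_def by (auto simp: image_iff)
qed

lemma LL_TT: "q \<in> LL X \<Longrightarrow> (Oq q, Cq q) \<in> TT X"
  using dlt_TT[of X "Eq q"] Eq_chains[of q X] LL_D[of q X] by auto


end

context reg begin
lemma LL_inj: "q1 \<in> LL X \<Longrightarrow> q2 \<in> LL X \<Longrightarrow> Oq q1 = Oq q2 \<Longrightarrow> Cq q1 = Cq q2 \<Longrightarrow> q1 = q2"
proof (induction q1 arbitrary: q2 X)
  case Nil
  then have "set q2 = {}" unfolding LL_def by auto
  then show ?case by simp
next
  case (Cons f q1')
  have X2: "set q2 = X" "set (f#q1') = X" using Cons(2,3) unfolding LL_def by auto
  then have "q2 \<noteq> []" by auto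
  then obtain g q2' where q2: "q2 = g#q2'" by (cases q2) auto
  have h1: "f \<in> firsts X - Oq (f#q1')" "\<forall>m \<in> firsts X - Oq (f#q1'). f \<le> m"
    using head_char[OF Cons(2)] by auto
  have h2: "g \<in> firsts X - Oq (f#q1')" "\<forall>m \<in> firsts X - Oq (f#q1'). g \<le> m"
    using head_char[OF Cons(3)] q2 Cons(4) by auto
  have "f = g" using h1 h2 by (meson antisym)
  note L1 = Cons(2) and L2 = Cons(3)[unfolded q2 \<open>f = g\<close>[symmetric]]
  have d1: "f \<notin> Cq q1'" "f \<notin> Cq q2'" using LL_D(1)[OF L1] LL_D(1)[OF L2] notin_Cq by auto
  define d where "d q \<longleftrightarrow> q \<noteq> [] \<and> hd q < f" for q
  have "f \<in> Cq (f#q1') \<longleftrightarrow> d q1'" "f \<in> Cq (f#q2') \<longleftrightarrow> d q2'"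
    using Cq_cons[of f q1'] Cq_cons[of f q2'] d1 unfolding d_def by auto
  then have dd: "d q1' = d q2'" using Cons(5) q2 \<open>f = g\<close> by simp
  have T1: "q1' \<in> LL (X - {f})" "q2' \<in> LL (X - {f})" using LL_tl L1 L2 by auto
  have eqs: "Oq q1' = Oq q2' \<and> Cq q1' = Cq q2'"
  proof (cases "d q1'")
    case True
    then have dq2: "d q2'" using dd by simp
    have s1: "hd q1' \<in> firsts X" "rho (hd q1') < rho f" "\<forall>x\<in>X. \<not> (rho (hd q1') < rho x \<and> rho x < rho f)"
      using second_char[OF L1] True unfolding d_def by auto
    have s2: "hd q2' \<in> firsts X" "rho (hd q2') < rho f" "\<forall>x\<in>X. \<not> (rho (hd q2') < rho x \<and> rho x < rho f)"
      using second_char[OF L2] dq2 unfolding d_def by auto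
    have hh: "hd q1' = hd q2'" using second_unique[OF s1 s2] .
    have n1: "hd q1' \<notin> Oq q1'" "hd q2' \<notin> Oq q2'"
      using hd_notin_Oq LL_D(1)[OF T1(1)] LL_D(1)[OF T1(2)] True dq2 unfolding d_def by auto
    have e: "Oq (f#q1') = Oq q1' \<union> {hd q1'}" "Oq (f#q2') = Oq q2' \<union> {hd q2'}"
      using Oq_cons[of f q1'] Oq_cons[of f q2'] True dq2 unfolding d_def by auto
    have o1: "Oq q1' = Oq (f#q1') - {hd q1'}" using e(1) n1(1) by auto
    have o2: "Oq q2' = Oq (f#q2') - {hd q2'}" using e(2) n1(2) by auto
    have o: "Oq q1' = Oq q2'" using o1 o2 hh Cons(4) q2 \<open>f = g\<close> by simp
    have e': "Cq (f#q1') = Cq q1' \<union> {f}" "Cq (f#q2') = Cq q2' \<union> {f}"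
      using Cq_cons[of f q1'] Cq_cons[of f q2'] True dq2 unfolding d_def by auto
    have c1: "Cq q1' = Cq (f#q1') - {f}" using e'(1) d1(1) by auto
    have c2: "Cq q2' = Cq (f#q2') - {f}" using e'(2) d1(2) by auto
    have "Cq q1' = Cq q2'" using c1 c2 Cons(5) q2 \<open>f = g\<close> by simp
    then show ?thesis using o by simp
  next
    case False
    then have dq2: "\<not> d q2'" using dd by simp
    have "Oq (f#q1') = Oq q1'" "Oq (f#q2') = Oq q2'" "Cq (f#q1') = Cq q1'" "Cq (f#q2') = Cq q2'"
      using Oq_cons[of f q1'] Oq_cons[of f q2'] Cq_cons[of f q1'] Cq_cons[of f q2'] False dq2
      unfolding d_def by auto
    then show ?thesis using Cons(4,5) q2 \<open>f = g\<close> by simp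
  qed
  have "q1' = q2'" using Cons(1)[OF T1] eqs by blast
  then show ?case using q2 \<open>f = g\<close> by simp
qed

lemma firsts_sub: "i \<in> firsts X \<Longrightarrow> i \<in> Y \<Longrightarrow> Y \<subseteq> X \<Longrightarrow> i \<in> firsts Y"
  unfolding firsts_def by auto

lemma firsts_up: "h \<in> firsts (X - {f}) \<Longrightarrow> rho h \<noteq> rho f \<Longrightarrow> h \<in> firsts X"
  unfolding firsts_def by auto

lemma firsts_last:
  assumes X: "finite X" "X \<noteq> {}" and T: "(Op,Cl) \<in> TT X"
  shows "firsts X - Op \<noteq> {}"
proof -
  have sub: "Op \<subseteq> X" "Cl \<subseteq> X" and cd: "card Op = card Cl"
    and hall: "\<And>r. card {x\<in>Cl. rho x \<le> r} \<le> card {y\<in>Op. rho y < r}"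
    using T unfolding TT_def by auto
  define z where "z = Max X"
  have zX: "z \<in> X" "\<And>x. x \<in> X \<Longrightarrow> x \<le> z" using Max_in[OF X] Max_ge[OF X(1)] unfolding z_def by auto
  define R where "R = rho z"
  have le: "\<And>x. x \<in> X \<Longrightarrow> rho x \<le> R" using zX mono unfolding R_def by auto
  define M where "M = {x\<in>X. rho x = R}"
  have M: "finite M" "M \<noteq> {}" using X(1) zX(1) unfolding M_def R_def by auto
  define m where "m = Min M"
  have m: "m \<in> M" "\<And>x. x \<in> M \<Longrightarrow> m \<le> x" using Min_in[OF M] Min_le[OF M(1)] unfolding m_def by auto
  have mf: "m \<in> firsts X" using m unfolding M_def firsts_def by auto
  have "{x\<in>Cl. rho x \<le> R} = Cl" using le sub by auto
  then have "card Cl \<le> card {y\<in>Op. rho y < R}" using hall[of R] by simp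
  moreover have fo: "finite Op" using finite_subset[OF sub(1) X(1)] .
  ultimately have "card {y\<in>Op. rho y < R} = card Op" using cd card_mono[OF fo, of "{y\<in>Op. rho y < R}"] by auto
  then have "{y\<in>Op. rho y < R} = Op" using card_subset_eq[OF fo, of "{y\<in>Op. rho y < R}"] by auto
  moreover have "rho m = R" using m unfolding M_def by auto
  ultimately have "m \<notin> Op" by auto
  then show ?thesis using mf by auto
qed

lemma TT_step2:
  assumes X: "finite X" and T: "(Op,Cl) \<in> TT X" and f: "f \<in> Cl" "f \<notin> Op"
    and i: "i \<in> Op" "rho i < rho f" "\<forall>x\<in>X. \<not> (rho i < rho x \<and> rho x < rho f)"
  shows "(Op - {i}, Cl - {f}) \<in> TT (X - {f})"
proof -
  have sub: "Op \<subseteq> X" "Cl \<subseteq> X" and cd: "card Op = card Cl"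
    and hall: "\<And>r. card {x\<in>Cl. rho x \<le> r} \<le> card {y\<in>Op. rho y < r}"
    using T unfolding TT_def by auto
  have fin: "finite Op" "finite Cl" using sub X finite_subset by auto
  have "card {x\<in>Cl - {f}. rho x \<le> r} \<le> card {y\<in>Op - {i}. rho y < r}" for r
  proof (cases "rho f \<le> r")
    case True
    have "{x\<in>Cl - {f}. rho x \<le> r} = {x\<in>Cl. rho x \<le> r} - {f}" by auto
    moreover have "f \<in> {x\<in>Cl. rho x \<le> r}" using f True by simp
    ultimately have 1: "card {x\<in>Cl - {f}. rho x \<le> r} = card {x\<in>Cl. rho x \<le> r} - 1"
      using fin by simp
    have "{y\<in>Op - {i}. rho y < r} = {y\<in>Op. rho y < r} - {i}" by auto
    moreover have "i \<in> {y\<in>Op. rho y < r}" using i True by simp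
    ultimately have 2: "card {y\<in>Op - {i}. rho y < r} = card {y\<in>Op. rho y < r} - 1"
      using fin by simp
    show ?thesis using 1 2 hall[of r] by simp
  next
    case False
    show ?thesis
    proof (cases "r \<le> rho i")
      case True
      have "{x\<in>Cl - {f}. rho x \<le> r} = {x\<in>Cl. rho x \<le> r}" using False by auto
      moreover have "{y\<in>Op - {i}. rho y < r} = {y\<in>Op. rho y < r}" using True by auto
      ultimately show ?thesis using hall[of r] by simp
    next
      case False2: False
      define A where "A = {x\<in>Cl. rho x \<le> r}"
      have A1: "{x\<in>Cl - {f}. rho x \<le> r} = A" using False unfolding A_def by auto
      have "insert f A \<subseteq> {x\<in>Cl. rho x \<le> rho f}" using f A_def False by auto
      then have "card (insert f A) \<le> card {x\<in>Cl. rho x \<le> rho f}" using fin by (intro card_mono) auto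
      moreover have "card (insert f A) = card A + 1" using False fin unfolding A_def by simp
      ultimately have c1: "card A + 1 \<le> card {y\<in>Op. rho y < rho f}" using hall[of "rho f"] by simp
      have "{y\<in>Op. rho y < rho f} = {y\<in>Op. rho y < r}"
      proof (intro set_eqI iffI)
        fix y assume y: "y \<in> {y\<in>Op. rho y < rho f}"
        then have "y \<in> X" using sub by auto
        then have "\<not> (rho i < rho y \<and> rho y < rho f)" using i(3) by blast
        then show "y \<in> {y\<in>Op. rho y < r}" using y False2 by auto
      next
        fix y assume "y \<in> {y\<in>Op. rho y < r}"
        then show "y \<in> {y\<in>Op. rho y < rho f}" using False by auto
      qed
      then have c2: "card A + 1 \<le> card {y\<in>Op. rho y < r}" using c1 by simp
      have "{y\<in>Op - {i}. rho y < r} = {y\<in>Op. rho y < r} - {i}" by auto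
      moreover have "i \<in> {y\<in>Op. rho y < r}" using i False2 by simp
      ultimately have "card {y\<in>Op - {i}. rho y < r} = card {y\<in>Op. rho y < r} - 1"
        using fin by simp
      then show ?thesis using A1 c2 by simp
    qed
  qed
  moreover have "card (Op - {i}) = card (Cl - {f})" using cd fin i f by simp
  moreover have "Op - {i} \<subseteq> X - {f}" "Cl - {f} \<subseteq> X - {f}" using sub f by auto
  ultimately show ?thesis unfolding TT_def by auto
qed

lemma cons_LL:
  assumes f: "f \<in> firsts X" and q: "q' \<in> LL (X - {f})"
    and nb: "q' \<noteq> [] \<and> hd q' < f \<longrightarrow> (\<forall>x\<in>X. \<not> (rho (hd q') < rho x \<and> rho x < rho f))"
  shows "f#q' \<in> LL X"
proof -
  note L = LL_D[OF q]
  have fX: "f \<in> X" and ff: "\<And>y. y \<in> X \<Longrightarrow> rho y = rho f \<Longrightarrow> f \<le> y" using f unfolding firsts_def by auto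
  have dist: "distinct (f#q')" using L by auto
  have st: "set (f#q') = X" using L fX by auto
  have par: "par (f#q')" unfolding par_def
  proof (intro allI impI)
    fix u v assume h: "u < length (f#q')" "v < length (f#q')" "(f#q')!u < (f#q')!v" "rho ((f#q')!u) = rho ((f#q')!v)"
    show "u < v"
    proof (cases u)
      case 0
      then show ?thesis using h by (cases v) auto
    next
      case (Suc u')
      show ?thesis
      proof (cases v)
        case 0
        have "(f#q')!u \<in> X" using h(1) st nth_mem by blast
        then have "f \<le> (f#q')!u" using ff h(4) 0 by simp
        then show ?thesis using h(3) 0 by simp
      next
        case (Suc v')
        then show ?thesis using parD[OF L(3), of u' v'] h \<open>u = Suc u'\<close> by simp
      qed
    qed
  qed
  have av: "av (f#q')" unfolding av_def
  proof
    assume "\<exists>v t. desc (f#q') v \<and> Suc v < t \<and> t < length (f#q') \<and> (f#q')!(Suc v) < (f#q')!t \<and> (f#q')!t < (f#q')!v \<and>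
      rho ((f#q')!t) \<noteq> rho ((f#q')!v) \<and> rho ((f#q')!t) \<noteq> rho ((f#q')!(Suc v)) \<and> rho ((f#q')!(Suc v)) \<noteq> rho ((f#q')!v)"
    then obtain v t where h: "desc (f#q') v" "Suc v < t" "t < length (f#q')" "(f#q')!(Suc v) < (f#q')!t" "(f#q')!t < (f#q')!v"
      "rho ((f#q')!t) \<noteq> rho ((f#q')!v)" "rho ((f#q')!t) \<noteq> rho ((f#q')!(Suc v))" "rho ((f#q')!(Suc v)) \<noteq> rho ((f#q')!v)"
      by blast
    show False
    proof (cases v)
      case 0
      have d: "q' \<noteq> [] \<and> hd q' < f" using h(1) 0 desc_0 by simp
      have hq: "(f#q')!(Suc 0) = hd q'" using d by (simp add: hd_conv_nth)
      have xX: "(f#q')!t \<in> X" using h(3) st nth_mem by blast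
      have "rho (hd q') \<le> rho ((f#q')!t)" "rho ((f#q')!t) \<le> rho f"
        using mono h(4,5) 0 hq by (auto intro: less_imp_le)
      then have "rho (hd q') < rho ((f#q')!t) \<and> rho ((f#q')!t) < rho f" using h(6,7) 0 hq by auto
      then show False using nb d xX by blast
    next
      case (Suc v')
      obtain t' where t': "t = Suc t'" using h(2) by (cases t) auto
      have "desc q' v'" using h(1) Suc by (simp add: desc_Suc)
      then show False using avD[OF L(4) \<open>desc q' v'\<close>, of t'] h Suc t' by simp
    qed
  qed
  show ?thesis unfolding LL_def using dist st par av by blast
qed

lemma LL_surj:
  assumes X: "finite X"
  shows "(Op,Cl) \<in> TT X \<Longrightarrow> \<exists>q\<in>LL X. Oq q = Op \<and> Cq q = Cl"
  using X
proof (induction "card X" arbitrary: X Op Cl)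
  case 0
  then have "X = {}" by simp
  then have "Op = {}" "Cl = {}" using 0(2) unfolding TT_def by auto
  moreover have "[] \<in> LL {}" unfolding LL_def par_def av_def desc_def by simp
  moreover have "Oq [] = {}" "Cq [] = {}" unfolding Oq_def Cq_def desc_def by auto
  ultimately show ?case using \<open>X = {}\<close> by blast
next
  case (Suc k)
  have TX: "(Op,Cl) \<in> TT X" "finite X" using Suc.prems by auto
  have X: "finite X" "X \<noteq> {}" using TX(2) Suc.hyps(2) by auto
  have sub: "Op \<subseteq> X" "Cl \<subseteq> X" and cd: "card Op = card Cl"
    and hall: "\<And>r. card {x\<in>Cl. rho x \<le> r} \<le> card {y\<in>Op. rho y < r}"
    using TX(1) unfolding TT_def by auto
  have Fne: "firsts X - Op \<noteq> {}" using firsts_last[OF X TX(1)] .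
  have Ffin: "finite (firsts X - Op)" using X unfolding firsts_def by auto
  define f where "f = Min (firsts X - Op)"
  have fF0: "f \<in> firsts X - Op" using Min_in[OF Ffin Fne] unfolding f_def .
  have fF: "f \<in> firsts X" "f \<notin> Op" "\<And>m. m \<in> firsts X - Op \<Longrightarrow> f \<le> m"
    using fF0 Min_le[OF Ffin] unfolding f_def by auto
  have fX: "f \<in> X" using fF unfolding firsts_def by auto
  have ff: "\<And>y. y \<in> X \<Longrightarrow> rho y = rho f \<Longrightarrow> f \<le> y" using fF unfolding firsts_def by auto
  have ck: "k = card (X - {f})" using Suc.hyps(2) fX X by simp
  have fX': "finite (X - {f})" using X by simp
  show ?case
  proof (cases "f \<in> Cl")
    case True
    define S where "S = {x\<in>X. rho x < rho f}"
    have "{y\<in>Op. rho y < rho f} \<noteq> {}" using TT_S_ne[OF X(1) TX(1) True] .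
    then have Sne: "S \<noteq> {}" using sub unfolding S_def by auto
    have Sfin: "finite S" using X unfolding S_def by auto
    define R1 where "R1 = Max (rho ` S)"
    have R1: "R1 \<in> rho ` S" "\<And>x. x \<in> S \<Longrightarrow> rho x \<le> R1"
      using Max_in[of "rho ` S"] Max_ge[of "rho ` S"] Sne Sfin unfolding R1_def by auto
    define M where "M = {x\<in>X. rho x = R1}"
    have M: "finite M" "M \<noteq> {}" using X R1(1) unfolding M_def S_def by auto
    define i where "i = Min M"
    have iM: "i \<in> M" "\<And>x. x \<in> M \<Longrightarrow> i \<le> x" using Min_in[OF M] Min_le[OF M(1)] unfolding i_def by auto
    have iX: "i \<in> X" "rho i = R1" using iM unfolding M_def by auto
    have if1: "i \<in> firsts X" using iM iX unfolding firsts_def M_def by auto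
    have ir: "rho i < rho f" using R1(1) iX unfolding S_def by auto
    have inb: "\<forall>x\<in>X. \<not> (rho i < rho x \<and> rho x < rho f)"
      using R1(2) iX unfolding S_def by fastforce
    have iOp: "i \<in> Op"
    proof (rule ccontr)
      assume "i \<notin> Op"
      then have "f \<le> i" using fF(3) if1 by simp
      then show False using rho_less[OF ir] by simp
    qed
    have T': "(Op - {i}, Cl - {f}) \<in> TT (X - {f})" using TT_step2[OF X(1) TX(1) True fF(2) iOp ir inb] .
    obtain q' where q': "q' \<in> LL (X - {f})" "Oq q' = Op - {i}" "Cq q' = Cl - {f}"
      using Suc.hyps(1)[OF ck T' fX'] by blast
    have "i \<in> X - {f}" using iX ir by auto
    have qne: "q' \<noteq> []"
    proof
      assume "q' = []"
      then have "X - {f} = {}" using LL_D(2)[OF q'(1)] by simp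
      then show False using \<open>i \<in> X - {f}\<close> by blast
    qed
    have hc: "hd q' \<in> firsts (X - {f}) - (Op - {i})" "\<forall>m\<in>firsts (X - {f}) - (Op - {i}). hd q' \<le> m"
      using head_char[OF q'(1) qne] q'(2) by auto
    have "i \<in> firsts (X - {f}) - (Op - {i})" using firsts_sub[OF if1 \<open>i \<in> X - {f}\<close>] by auto
    then have hi: "hd q' \<le> i" using hc(2) by blast
    have "i \<le> hd q'"
    proof (rule ccontr)
      assume c: "\<not> i \<le> hd q'"
      then have "hd q' \<noteq> i" by simp
      then have hO: "hd q' \<notin> Op" using hc(1) by auto
      have "rho (hd q') \<le> rho i" using mono c by simp
      then have "rho (hd q') \<noteq> rho f" using ir by simp
      then have "hd q' \<in> firsts X" using firsts_up hc(1) by blast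
      then have "f \<le> hd q'" using fF(3) hO by simp
      then show False using c rho_less[OF ir] by simp
    qed
    then have hdi: "hd q' = i" using hi by simp
    have lt: "hd q' < f" using hdi rho_less[OF ir] by simp
    have "f#q' \<in> LL X" using cons_LL[OF fF(1) q'(1)] inb hdi by simp
    moreover have "Oq (f#q') = Op" using Oq_cons[of f q'] qne lt q'(2) hdi iOp by auto
    moreover have "Cq (f#q') = Cl" using Cq_cons[of f q'] qne lt q'(3) True by auto
    ultimately show ?thesis by blast
  next
    case False
    have T': "(Op, Cl) \<in> TT (X - {f})" using TX(1) fF(2) False unfolding TT_def by auto
    obtain q' where q': "q' \<in> LL (X - {f})" "Oq q' = Op" "Cq q' = Cl"
      using Suc.hyps(1)[OF ck T' fX'] by blast
    have nd: "\<not> (q' \<noteq> [] \<and> hd q' < f)"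
    proof
      assume d: "q' \<noteq> [] \<and> hd q' < f"
      have hc: "hd q' \<in> firsts (X - {f}) - Op" using head_char[OF q'(1)] d q'(2) by auto
      have hX: "hd q' \<in> X" using hc unfolding firsts_def by auto
      have "rho (hd q') \<noteq> rho f" using ff[OF hX] d by auto
      then have "hd q' \<in> firsts X" using firsts_up hc by blast
      then have "f \<le> hd q'" using fF(3) hc by simp
      then show False using d by simp
    qed
    have "f#q' \<in> LL X" using cons_LL[OF fF(1) q'(1)] nd by blast
    moreover have "Oq (f#q') = Op" "Cq (f#q') = Cl" using Oq_cons[of f q'] Cq_cons[of f q'] nd q' by auto
    ultimately show ?thesis by blast
  qed
qed

lemma LL_bij: "finite X \<Longrightarrow> bij_betw (\<lambda>q. (Oq q, Cq q)) (LL X) (TT X)"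
  unfolding bij_betw_def
proof (intro conjI)
  assume X: "finite X"
  show "inj_on (\<lambda>q. (Oq q, Cq q)) (LL X)" by (intro inj_onI) (use LL_inj in auto)
  show "(\<lambda>q. (Oq q, Cq q)) ` LL X = TT X"
  proof
    show "(\<lambda>q. (Oq q, Cq q)) ` LL X \<subseteq> TT X" using LL_TT by auto
    show "TT X \<subseteq> (\<lambda>q. (Oq q, Cq q)) ` LL X"
    proof
      fix p assume "p \<in> TT X"
      then obtain Op Cl where p: "p = (Op,Cl)" "(Op,Cl) \<in> TT X" by (cases p) auto
      then obtain q where "q \<in> LL X" "Oq q = Op" "Cq q = Cl" using LL_surj[OF X] by blast
      then show "p \<in> (\<lambda>q. (Oq q, Cq q)) ` LL X" using p by auto
    qed
  qed
qed


end



lemma region_mono: "i \<le> i' \<Longrightarrow> region n J i \<le> region n J i'"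
  unfolding region_def by (rule card_mono) auto

lemma reg_region: "reg (region n J)"
  by unfold_locales (rule region_mono)

lemma region_Suc:
  "region n J (Suc i) = region n J i + (if 1 \<le> i \<and> i < n \<and> i \<notin> J then 1 else 0)"
proof -
  have e: "{j. 1 \<le> j \<and> j < Suc i \<and> j < n \<and> j \<notin> J} =
     {j. 1 \<le> j \<and> j < i \<and> j < n \<and> j \<notin> J} \<union> (if 1 \<le> i \<and> i < n \<and> i \<notin> J then {i} else {})"
    by (auto simp: less_Suc_eq)
  have f: "finite {j. 1 \<le> j \<and> j < i \<and> j < n \<and> j \<notin> J}" by simp
  show ?thesis unfolding region_def e using f by auto
qed

lemma region_J: "1 \<le> i \<Longrightarrow> i < n \<Longrightarrow> (i \<in> J \<longleftrightarrow> region n J i = region n J (Suc i))"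
  using region_Suc[of n J i] by auto

lemma chain_less:
  assumes "\<And>c. a \<le> c \<Longrightarrow> c < b \<Longrightarrow> f c < (f (Suc c) :: nat)" "a < b"
  shows "f a < f b"
  using assms
proof (induction b)
  case 0 then show ?case by simp
next
  case (Suc b)
  show ?case
  proof (cases "a < b")
    case True
    then have "f a < f b" using Suc by simp
    moreover have "f b < f (Suc b)" using Suc(2)[of b] True by simp
    ultimately show ?thesis by simp
  next
    case False
    then have "a = b" using Suc(3) by simp
    then show ?thesis using Suc(2)[of b] by simp
  qed
qed

lemma par_equiv:
  assumes w: "w permutes {1..n}"
  shows "(\<forall>i. 1 \<le> i \<and> i < n \<and> i \<in> J \<longrightarrow> w i < w (Suc i)) \<longleftrightarrow>
    (\<forall>a b. a \<in> {1..n} \<longrightarrow> b \<in> {1..n} \<longrightarrow> a < b \<longrightarrow> region n J a = region n J b \<longrightarrow> w a < w b)"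
proof
  assume h: "\<forall>i. 1 \<le> i \<and> i < n \<and> i \<in> J \<longrightarrow> w i < w (Suc i)"
  show "\<forall>a b. a \<in> {1..n} \<longrightarrow> b \<in> {1..n} \<longrightarrow> a < b \<longrightarrow> region n J a = region n J b \<longrightarrow> w a < w b"
  proof (intro allI impI)
    fix a b assume ab: "a \<in> {1..n}" "b \<in> {1..n}" "a < b" "region n J a = region n J b"
    show "w a < w b"
    proof (rule chain_less[OF _ ab(3)])
      fix c assume c: "a \<le> c" "c < b"
      have "region n J a \<le> region n J c" "region n J c \<le> region n J (Suc c)" "region n J (Suc c) \<le> region n J b"
        using region_mono c by auto
      then have "region n J c = region n J (Suc c)" using ab(4) by simp
      moreover have "1 \<le> c" "c < n" using c ab by auto
      ultimately have "c \<in> J" using region_J by blast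
      then show "w c < w (Suc c)" using h \<open>1 \<le> c\<close> \<open>c < n\<close> by blast
    qed
  qed
next
  assume h: "\<forall>a b. a \<in> {1..n} \<longrightarrow> b \<in> {1..n} \<longrightarrow> a < b \<longrightarrow> region n J a = region n J b \<longrightarrow> w a < w b"
  show "\<forall>i. 1 \<le> i \<and> i < n \<and> i \<in> J \<longrightarrow> w i < w (Suc i)"
  proof (intro allI impI)
    fix i assume i: "1 \<le> i \<and> i < n \<and> i \<in> J"
    then have "region n J i = region n J (Suc i)" using region_J by blast
    then show "w i < w (Suc i)" using h i by auto
  qed
qed


lemma perm_list:
  assumes w: "w permutes {1..n}"
  defines "q \<equiv> map (inv w) [1..<Suc n]"
  shows "length q = n" "\<And>v. v < n \<Longrightarrow> q!v = inv w (Suc v)" "\<And>v. v < n \<Longrightarrow> w (q!v) = Suc v"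
    "distinct q" "set q = {1..n}"
    "\<And>x. x \<in> {1..n} \<Longrightarrow> 1 \<le> w x \<and> w x \<le> n \<and> w x - 1 < n \<and> q!(w x - 1) = x"
proof -
  show l: "length q = n" unfolding q_def by simp
  show nth: "\<And>v. v < n \<Longrightarrow> q!v = inv w (Suc v)" unfolding q_def by (subst nth_map_upt) auto
  show "\<And>v. v < n \<Longrightarrow> w (q!v) = Suc v" using nth permutes_inverses(1)[OF w] by simp
  have iw: "inv w permutes {1..n}" using permutes_inv[OF w] .
  show "distinct q" unfolding q_def distinct_map using permutes_inj[OF iw] by (auto intro: inj_on_subset)
  show "set q = {1..n}" unfolding q_def using permutes_image[OF iw]
    by (metis atLeastLessThanSuc_atLeastAtMost image_set set_upt)
  fix x assume x: "x \<in> {1..n}"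
  have wx: "w x \<in> {1..n}" using permutes_in_image[OF w] x by simp
  then have "w x - 1 < n" by auto
  moreover have "q!(w x - 1) = x" using nth[of "w x - 1"] wx permutes_inverses(2)[OF w] by auto
  ultimately show "1 \<le> w x \<and> w x \<le> n \<and> w x - 1 < n \<and> q!(w x - 1) = x" using wx by auto
qed

lemma par_list:
  assumes w: "w permutes {1..n}"
  shows "reg.par (region n J) (map (inv w) [1..<Suc n]) \<longleftrightarrow>
    (\<forall>a b. a \<in> {1..n} \<longrightarrow> b \<in> {1..n} \<longrightarrow> a < b \<longrightarrow> region n J a = region n J b \<longrightarrow> w a < w b)"
  (is "reg.par _ ?q \<longleftrightarrow> _")
proof -
  note P = perm_list[OF w]
  show ?thesis unfolding reg.par_def[OF reg_region] P(1)
  proof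
    assume h: "\<forall>u v. u < n \<longrightarrow> v < n \<longrightarrow> ?q!u < ?q!v \<longrightarrow> region n J (?q!u) = region n J (?q!v) \<longrightarrow> u < v"
    show "\<forall>a b. a \<in> {1..n} \<longrightarrow> b \<in> {1..n} \<longrightarrow> a < b \<longrightarrow> region n J a = region n J b \<longrightarrow> w a < w b"
    proof (intro allI impI)
      fix a b assume ab: "a \<in> {1..n}" "b \<in> {1..n}" "a < b" "region n J a = region n J b"
      have "w a - 1 < w b - 1" using h[rule_format, of "w a - 1" "w b - 1"] P(6)[OF ab(1)] P(6)[OF ab(2)] ab by simp
      then show "w a < w b" by simp
    qed
  next
    assume h: "\<forall>a b. a \<in> {1..n} \<longrightarrow> b \<in> {1..n} \<longrightarrow> a < b \<longrightarrow> region n J a = region n J b \<longrightarrow> w a < w b"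
    show "\<forall>u v. u < n \<longrightarrow> v < n \<longrightarrow> ?q!u < ?q!v \<longrightarrow> region n J (?q!u) = region n J (?q!v) \<longrightarrow> u < v"
    proof (intro allI impI)
      fix u v assume uv: "u < n" "v < n" "?q!u < ?q!v" "region n J (?q!u) = region n J (?q!v)"
      have m: "?q!u \<in> {1..n}" "?q!v \<in> {1..n}" using P(1,5) uv nth_mem[of u ?q] nth_mem[of v ?q] by auto
      have "w (?q!u) < w (?q!v)" using h[rule_format, OF m] uv(3,4) by blast
      then show "u < v" using P(3) uv by simp
    qed
  qed
qed

lemma av_list:
  assumes w: "w permutes {1..n}"
  shows "reg.av (region n J) (map (inv w) [1..<Suc n]) \<longleftrightarrow>
    \<not> (\<exists>i j k. 1 \<le> i \<and> i < j \<and> j < k \<and> k \<le> n \<and>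
             \<not> same_region n J i j \<and> \<not> same_region n J j k \<and> \<not> same_region n J i k \<and>
             w k < w i \<and> w i < w j \<and> w i = w k + 1)"
  (is "reg.av _ ?q \<longleftrightarrow> \<not> ?B")
proof -
  note P = perm_list[OF w]
  have "(\<exists>v t. reg.desc ?q v \<and> Suc v < t \<and> t < length ?q \<and> ?q!(Suc v) < ?q!t \<and> ?q!t < ?q!v \<and>
      region n J (?q!t) \<noteq> region n J (?q!v) \<and> region n J (?q!t) \<noteq> region n J (?q!(Suc v)) \<and>
      region n J (?q!(Suc v)) \<noteq> region n J (?q!v)) \<longleftrightarrow> ?B" (is "?A \<longleftrightarrow> ?B")
  proof
    assume ?A
    then obtain v t where h: "reg.desc ?q v" "Suc v < t" "t < length ?q" "?q!(Suc v) < ?q!t" "?q!t < ?q!v"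
      "region n J (?q!t) \<noteq> region n J (?q!v)" "region n J (?q!t) \<noteq> region n J (?q!(Suc v))"
      "region n J (?q!(Suc v)) \<noteq> region n J (?q!v)" by blast
    note h = h[unfolded P(1)]
    have sv: "Suc v < n" "v < n" using h(2,3) by auto
    have mem: "?q!(Suc v) \<in> {1..n}" "?q!v \<in> {1..n}" "?q!t \<in> {1..n}"
      using P(1,5) sv h(3) nth_mem[of "Suc v" ?q] nth_mem[of v ?q] nth_mem[of t ?q] by auto
    have ws: "w (?q!(Suc v)) = Suc (Suc v)" "w (?q!v) = Suc v" "w (?q!t) = Suc t"
      using P(3) sv h(3) by auto
    show ?B
      apply (rule exI[of _ "?q!(Suc v)"], rule exI[of _ "?q!t"], rule exI[of _ "?q!v"])
      using h mem ws unfolding same_region_def by auto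
  next
    assume ?B
    then obtain i j k where h: "1 \<le> i" "i < j" "j < k" "k \<le> n" "\<not> same_region n J i j" "\<not> same_region n J j k"
      "\<not> same_region n J i k" "w k < w i" "w i < w j" "w i = w k + 1" by blast
    have mem: "i \<in> {1..n}" "j \<in> {1..n}" "k \<in> {1..n}" using h by auto
    note Pi = P(6)[OF mem(1)] and Pj = P(6)[OF mem(2)] and Pk = P(6)[OF mem(3)]
    define v where "v = w k - 1"
    define t where "t = w j - 1"
    have qv: "?q!v = k" "?q!(Suc v) = i" "?q!t = j" "Suc v < t" "t < n" "Suc v < n"
      using Pi Pj Pk h(8-10) unfolding v_def t_def by (auto simp: Suc_diff_1)
    have d: "reg.desc ?q v" unfolding reg.desc_def[OF reg_region] using qv h P(1) by simp
    show ?A using d qv h P(1) unfolding same_region_def by metis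
  qed
  then show ?thesis unfolding reg.av_def[OF reg_region] by blast
qed

lemma perm_LL:
  assumes w: "w permutes {1..n}"
  shows "w \<in> J231_avoiding n J \<longleftrightarrow> map (inv w) [1..<Suc n] \<in> reg.LL (region n J) {1..n}"
proof -
  note P = perm_list[OF w]
  have "w \<in> J231_avoiding n J \<longleftrightarrow> reg.par (region n J) (map (inv w) [1..<Suc n]) \<and>
     reg.av (region n J) (map (inv w) [1..<Suc n])"
    unfolding J231_avoiding_def parabolic_quotient_def
    using w par_equiv[OF w, of J] par_list[OF w, of J] av_list[OF w, of J] by auto
  then show ?thesis unfolding reg.LL_def[OF reg_region] using P(4,5) by auto
qed

lemma perm_LL_bij:
  "bij_betw (\<lambda>w. map (inv w) [1..<Suc n]) (J231_avoiding n J) (reg.LL (region n J) {1..n})"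
  unfolding bij_betw_def
proof
  have perm: "\<And>w. w \<in> J231_avoiding n J \<Longrightarrow> w permutes {1..n}"
    unfolding J231_avoiding_def parabolic_quotient_def by auto
  show "inj_on (\<lambda>w. map (inv w) [1..<Suc n]) (J231_avoiding n J)"
  proof (rule inj_onI)
    fix w1 w2 assume w: "w1 \<in> J231_avoiding n J" "w2 \<in> J231_avoiding n J"
      and eq: "map (inv w1) [1..<Suc n] = map (inv w2) [1..<Suc n]"
    have p1: "w1 permutes {1..n}" and p2: "w2 permutes {1..n}" using perm w by auto
    have "inv w1 x = inv w2 x" for x
    proof (cases "x \<in> {1..n}")
      case True
      then have "x - 1 < n" "Suc (x - 1) = x" by auto
      then show ?thesis using perm_list(2)[OF p1, of "x - 1"] perm_list(2)[OF p2, of "x - 1"] eq by metis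
    next
      case False
      then show ?thesis using permutes_not_in[OF permutes_inv[OF p1]] permutes_not_in[OF permutes_inv[OF p2]] by simp
    qed
    then have "inv w1 = inv w2" by auto
    then show "w1 = w2" using permutes_inv_inv[OF p1] permutes_inv_inv[OF p2] by metis
  qed
  show "(\<lambda>w. map (inv w) [1..<Suc n]) ` J231_avoiding n J = reg.LL (region n J) {1..n}"
  proof
    show "(\<lambda>w. map (inv w) [1..<Suc n]) ` J231_avoiding n J \<subseteq> reg.LL (region n J) {1..n}"
      using perm perm_LL by blast
    show "reg.LL (region n J) {1..n} \<subseteq> (\<lambda>w. map (inv w) [1..<Suc n]) ` J231_avoiding n J"
    proof
      fix q assume q: "q \<in> reg.LL (region n J) {1..n}"
      have dq: "distinct q" "set q = {1..n}" using q unfolding reg.LL_def[OF reg_region] by auto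
      have lq: "length q = n" using distinct_card[OF dq(1)] dq(2) by simp
      define g where "g x = (if x \<in> {1..n} then q!(x - 1) else x)" for x
      have "bij_betw g {1..n} {1..n}"
        unfolding bij_betw_def
      proof
        show "inj_on g {1..n}"
        proof (rule inj_onI)
          fix x y assume xy: "x \<in> {1..n}" "y \<in> {1..n}" "g x = g y"
          then have "q!(x-1) = q!(y-1)" unfolding g_def by simp
          moreover have "x - 1 < length q" "y - 1 < length q" using lq xy(1,2) by auto
          ultimately have "x - 1 = y - 1" using dq(1) nth_eq_iff_index_eq by blast
          then show "x = y" using xy by (cases x; cases y) auto
        qed
        show "g ` {1..n} = {1..n}"
        proof
          show "g ` {1..n} \<subseteq> {1..n}"
          proof
            fix y assume "y \<in> g ` {1..n}"
            then obtain x where x: "x \<in> {1..n}" "y = g x" by auto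
            then have "x - 1 < length q" using lq by auto
            then have "q!(x-1) \<in> set q" by (rule nth_mem)
            then show "y \<in> {1..n}" using x dq(2) unfolding g_def by simp
          qed
          show "{1..n} \<subseteq> g ` {1..n}"
          proof
            fix y assume "y \<in> {1..n}"
            then obtain u where u: "u < n" "q!u = y" using dq(2) lq by (metis in_set_conv_nth)
            then have "g (Suc u) = y" "Suc u \<in> {1..n}" unfolding g_def by auto
            then show "y \<in> g ` {1..n}" by force
          qed
        qed
      qed
      then have gp: "g permutes {1..n}" by (rule bij_imp_permutes) (auto simp: g_def)
      define w where "w = inv g"
      have wp: "w permutes {1..n}" unfolding w_def using permutes_inv[OF gp] .
      have iw: "inv w = g" unfolding w_def using permutes_inv_inv[OF gp] .
      have mq: "map (inv w) [1..<Suc n] = q"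
      proof (rule nth_equalityI)
        show "length (map (inv w) [1..<Suc n]) = length q" using lq by simp
        fix i assume "i < length (map (inv w) [1..<Suc n])"
        then have i: "i < n" by (simp del: upt_Suc)
        have "map (inv w) [1..<Suc n] ! i = inv w (1 + i)" using i by (subst nth_map_upt) auto
        also have "\<dots> = q!i" using i unfolding iw g_def by simp
        finally show "map (inv w) [1..<Suc n] ! i = q!i" .
      qed
      then have "w \<in> J231_avoiding n J" using perm_LL[OF wp] q by simp
      then show "q \<in> (\<lambda>w. map (inv w) [1..<Suc n]) ` J231_avoiding n J" using mq by force
    qed
  qed
qed




context reg begin

lemma bset_mem: "(a,b) \<in> bset P \<longleftrightarrow> bump P a b"
  by (simp add: bset_def)

lemma nnE_bset: "nnE (bset P) \<longleftrightarrow> \<not> (\<exists>i1 i2 j1 j2. bump P i1 i2 \<and> bump P j1 j2 \<and> (i1, i2) \<noteq> (j1, j2) \<and>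
            i1 < j1 \<and> j1 < j2 \<and> j2 < i2)"
  unfolding nnE_def bset_mem ..

lemma ncE_bset: "ncE (bset P) \<longleftrightarrow>
        (\<forall>i1 i2 j1 j2. bump P i1 i2 \<and> bump P j1 j2 \<and> (i1, i2) \<noteq> (j1, j2) \<and>
            i1 < j1 \<and> j1 < i2 \<and> i2 < j2 \<longrightarrow>
            rho i1 = rho j1 \<or> rho i2 = rho j1) \<and>
        (\<forall>i1 i2 j1 j2. bump P i1 i2 \<and> bump P j1 j2 \<and> (i1, i2) \<noteq> (j1, j2) \<and>
            i1 < j1 \<and> j1 < j2 \<and> j2 < i2 \<longrightarrow>
            \<not> rho i1 = rho j1)"
  unfolding ncE_def bset_mem ..

end

lemma NC_eq:
  "J_noncrossing n J = {P. partition_on {1..n} P \<and> (reg.regE (region n J) (reg.bset P) \<and> reg.ncE (region n J) (reg.bset P))}"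
proof -
  interpret R: reg "region n J" by (rule reg_region)
  have "P \<in> J_noncrossing n J \<longleftrightarrow> partition_on {1..n} P \<and> (R.regE (R.bset P) \<and> R.ncE (R.bset P))" for P
  proof (cases "partition_on {1..n} P")
    case True
    show ?thesis unfolding J_noncrossing_def mem_Collect_eq R.ncE_bset same_region_def
      using R.reg_equiv[OF True] by simp
  next
    case False
    then show ?thesis unfolding J_noncrossing_def by simp
  qed
  then show ?thesis by blast
qed

lemma NN_eq:
  "J_nonnesting n J = {P. partition_on {1..n} P \<and> (reg.regE (region n J) (reg.bset P) \<and> reg.nnE (reg.bset P))}"
proof -
  interpret R: reg "region n J" by (rule reg_region)
  have "P \<in> J_nonnesting n J \<longleftrightarrow> partition_on {1..n} P \<and> (R.regE (R.bset P) \<and> R.nnE (R.bset P))" for P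
  proof (cases "partition_on {1..n} P")
    case True
    show ?thesis unfolding J_nonnesting_def mem_Collect_eq R.nnE_bset same_region_def
      using R.reg_equiv[OF True] by simp
  next
    case False
    then show ?thesis unfolding J_nonnesting_def by simp
  qed
  then show ?thesis by blast
qed

theorem theorem1p2:
  fixes n :: nat and J :: "nat set"
  assumes "n > 0" and "J \<subseteq> {1..<n}"
  shows "(\<exists>f. bij_betw f (J231_avoiding n J) (J_noncrossing n J)) \<and>
         (\<exists>g. bij_betw g (J_noncrossing n J) (J_nonnesting n J)) \<and>
         card (J231_avoiding n J) = card (J_noncrossing n J) \<and>
         card (J_noncrossing n J) = card (J_nonnesting n J)"
proof -
  interpret R: reg "region n J" by (rule reg_region)
  have X: "finite {1..n}" by simp
  have c1: "card (J231_avoiding n J) = card (R.TT {1..n})"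
    using bij_betw_same_card[OF perm_LL_bij[of n J]] bij_betw_same_card[OF R.LL_bij[OF X]] by simp
  have c2: "card (J_noncrossing n J) = card (R.TT {1..n})"
  proof -
    have "bij_betw R.bset (J_noncrossing n J) (R.NCE {1..n})"
      unfolding NC_eq R.NCE_def using R.bset_bij[OF X, of "\<lambda>E. R.regE E \<and> R.ncE E"] by simp
    then show ?thesis using bij_betw_same_card R.NC_bij[OF X] by metis
  qed
  have c3: "card (J_nonnesting n J) = card (R.TT {1..n})"
  proof -
    have "bij_betw R.bset (J_nonnesting n J) (R.NNE {1..n})"
      unfolding NN_eq R.NNE_def using R.bset_bij[OF X, of "\<lambda>E. R.regE E \<and> R.nnE E"] by simp
    then show ?thesis using bij_betw_same_card R.NN_bij[OF X] by metis
  qed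
  have f1: "finite (J231_avoiding n J)"
  proof (rule finite_subset)
    show "J231_avoiding n J \<subseteq> {w. w permutes {1..n}}"
      unfolding J231_avoiding_def parabolic_quotient_def by auto
    show "finite {w. w permutes {1..n}}" using finite_permutations[OF X] .
  qed
  have f2: "finite (J_noncrossing n J)"
    using finite_subset[OF _ finitely_many_partition_on[OF X]] unfolding J_noncrossing_def by auto
  have f3: "finite (J_nonnesting n J)"
    using finite_subset[OF _ finitely_many_partition_on[OF X]] unfolding J_nonnesting_def by auto
  show ?thesis using c1 c2 c3 f1 f2 f3 finite_same_card_bij by metis
qed


end
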